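(* Let $L$ be a geometric lattice of rank $r+1$ with linearly ordered atoms, let $B_1,\dots,B_m$ be its nbc-bases in lexicographic order, and let $\Delta_j$ be as defined in the context. Then for $2\le j\le m$, $\Delta_j$ is homeomorphic to a closed $(r-1)$-dimensional ball.
   Context: A geometric lattice is a finite graded atomic lattice whose rank function satisfies the semimodular inequality. The order complex $\Delta(L)$ has the chains of $L-\{\hat 0,\hat 1\}$ as faces; facets correspond to maximal chains. Fix a linear order on the atoms; for a cover $x\lessdot y$ let $\lambda(x,y)$ be the least atom $a$ with $x\vee a=y$, and for a facet $F$ given by $\hat 0=x_0<\dots<x_{r+1}=\hat 1$ its minimal labeling is $\lambda(F)=(\lambda(x_0,x_1),\dots,\lambda(x_r,x_{r+1}))$. A basis is a set of $r+1$ atoms with join $\hat 1$; a circuit is a minimal dependent set of atoms (a set $A$ is independent if the rank of $\bigvee A$ is $|A|$); a broken circuit is a circuit minus its least element; an nbc-basis is a basis containing no broken circuit. The nbc-bases, each written as an increasing sequence, are ordered lexicographically: $B_1,\dots,B_m$. For an ordering $(b_1,\dots,b_{r+1})$ of a basis $B$, the associated facet is $b_1<b_1\vee b_2<\dots<b_1\vee\dots\vee b_r$, and its basis labeling is $(b_1,\dots,b_{r+1})$. $\Sigma_j$ is the subcomplex of $\Delta(L)$ that is the union of the facets associated to all orderings of $B_j$, and $\Delta_j$ is the pure subcomplex of $\Sigma_j$ generated by those facets of $\Sigma_j$ whose minimal labeling coincides with their basis labeling with respect to $B_j$. *)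

theory Defs
  imports "HOL-Analysis.Analysis"
begin

text \<open>Lattices are finite types with a (necessarily unique) complete lattice structure.\<close>

definition covers :: "'a::complete_lattice \<Rightarrow> 'a \<Rightarrow> bool" where
  "covers x y \<longleftrightarrow> x < y \<and> \<not> (\<exists>z. x < z \<and> z < y)"

definition is_atom :: "'a::complete_lattice \<Rightarrow> bool" where
  "is_atom a \<longleftrightarrow> covers bot a"

definition is_chain :: "'a::complete_lattice set \<Rightarrow> bool" where
  "is_chain C \<longleftrightarrow> (\<forall>a\<in>C. \<forall>b\<in>C. a \<le> b \<or> b \<le> a)"

definition lrank :: "'a::{finite,complete_lattice} \<Rightarrow> nat" where
  "lrank x = Max {card C | C. C \<subseteq> {y. y \<le> x} \<and> is_chain C} - 1"

definition graded :: "'a::{finite,complete_lattice} itself \<Rightarrow> bool" where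
  "graded _ \<longleftrightarrow> (\<forall>x y::'a. covers x y \<longrightarrow> lrank y = lrank x + 1)"

definition atomistic :: "'a::complete_lattice itself \<Rightarrow> bool" where
  "atomistic _ \<longleftrightarrow> (\<forall>x::'a. x = Sup {a. is_atom a \<and> a \<le> x})"

definition semimodular :: "'a::{finite,complete_lattice} itself \<Rightarrow> bool" where
  "semimodular _ \<longleftrightarrow> (\<forall>x y::'a. lrank (sup x y) + lrank (inf x y) \<le> lrank x + lrank y)"

definition geometric_lattice :: "'a::{finite,complete_lattice} itself \<Rightarrow> bool" where
  "geometric_lattice T \<longleftrightarrow> graded T \<and> atomistic T \<and> semimodular T"

text \<open>The linear order on atoms is given by an injective weight w: a precedes b iff w a < w b.\<close>

definition independent :: "'a::{finite,complete_lattice} set \<Rightarrow> bool" where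
  "independent A \<longleftrightarrow> (\<forall>a\<in>A. is_atom a) \<and> lrank (Sup A) = card A"

definition is_basis :: "'a::{finite,complete_lattice} set \<Rightarrow> bool" where
  "is_basis B \<longleftrightarrow> (\<forall>a\<in>B. is_atom a) \<and> card B = lrank (top::'a) \<and> Sup B = top"

definition is_circuit :: "'a::{finite,complete_lattice} set \<Rightarrow> bool" where
  "is_circuit C \<longleftrightarrow> (\<forall>a\<in>C. is_atom a) \<and> \<not> independent C \<and> (\<forall>D. D \<subset> C \<longrightarrow> independent D)"

definition broken_circuit :: "('a::{finite,complete_lattice} \<Rightarrow> nat) \<Rightarrow> 'a set \<Rightarrow> bool" where
  "broken_circuit w D \<longleftrightarrow> (\<exists>C. is_circuit C \<and> D = C - {arg_min_on w C})"

definition nbc_basis :: "('a::{finite,complete_lattice} \<Rightarrow> nat) \<Rightarrow> 'a set \<Rightarrow> bool" where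
  "nbc_basis w B \<longleftrightarrow> is_basis B \<and> \<not> (\<exists>D. D \<subseteq> B \<and> broken_circuit w D)"

definition lex_less :: "('a \<Rightarrow> nat) \<Rightarrow> 'a set \<Rightarrow> 'a set \<Rightarrow> bool" where
  "lex_less w B B' \<longleftrightarrow>
     (sorted_list_of_set (w ` B), sorted_list_of_set (w ` B')) \<in> lexord {(a, b). a < b}"

definition minlab :: "('a::complete_lattice \<Rightarrow> nat) \<Rightarrow> 'a \<Rightarrow> 'a \<Rightarrow> 'a" where
  "minlab w x y = arg_min w (\<lambda>a. is_atom a \<and> sup x a = y)"

definition pjoin :: "'a::complete_lattice list \<Rightarrow> nat \<Rightarrow> 'a" where
  "pjoin bs i = Sup (set (take i bs))"

definition assoc_facet :: "'a::complete_lattice list \<Rightarrow> 'a set" where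
  "assoc_facet bs = {pjoin bs i | i. 1 \<le> i \<and> i < length bs}"

definition minlab_eq_basislab :: "('a::complete_lattice \<Rightarrow> nat) \<Rightarrow> 'a list \<Rightarrow> bool" where
  "minlab_eq_basislab w bs \<longleftrightarrow>
     (\<forall>i < length bs. minlab w (pjoin bs i) (pjoin bs (Suc i)) = bs ! i)"

definition Delta :: "('a::complete_lattice \<Rightarrow> nat) \<Rightarrow> 'a set \<Rightarrow> 'a set set" where
  "Delta w B = {\<sigma>. \<exists>bs. distinct bs \<and> set bs = B \<and> minlab_eq_basislab w bs
                        \<and> \<sigma> \<subseteq> assoc_facet bs}"

definition realization :: "'a::finite set set \<Rightarrow> (real ^ 'a) set" where
  "realization K = (\<Union>\<sigma>\<in>K. convex hull ((\<lambda>v. axis v 1) ` \<sigma>))"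

end

theory Submission
  imports Defs
begin

lemma lrank_ex:
  fixes x :: "'a::{finite,complete_lattice}"
  shows "\<exists>C. C \<subseteq> {y. y \<le> x} \<and> is_chain C \<and> card C = lrank x + 1"
    and "\<And>C. C \<subseteq> {y. y \<le> x} \<Longrightarrow> is_chain C \<Longrightarrow> card C \<le> lrank x + 1"
proof -
  let ?S = "{card C | C. C \<subseteq> {y. y \<le> x} \<and> is_chain C}"
  have fin: "finite ?S"
  proof -
    have "?S \<subseteq> card ` (UNIV :: 'a set set)" by auto
    thus ?thesis by (rule finite_subset) simp
  qed
  have one: "1 \<in> ?S"
    by (rule CollectI, rule exI[of _ "{x}"]) (auto simp: is_chain_def)
  hence ge1: "Max ?S \<ge> 1" using fin by (simp add: Max_ge)
  have "Max ?S \<in> ?S" using fin one by (intro Max_in) auto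
  then obtain C where C: "C \<subseteq> {y. y \<le> x}" "is_chain C" "card C = Max ?S" by auto
  show "\<exists>C. C \<subseteq> {y. y \<le> x} \<and> is_chain C \<and> card C = lrank x + 1"
    using C ge1 unfolding lrank_def by (intro exI[of _ C]) auto
  fix D assume "D \<subseteq> {y. y \<le> x}" "is_chain D"
  hence "card D \<in> ?S" by auto
  hence "card D \<le> Max ?S" using fin by simp
  thus "card D \<le> lrank x + 1" using ge1 unfolding lrank_def by simp
qed

lemma lrank_strict_mono:
  fixes x y :: "'a::{finite,complete_lattice}"
  assumes "x < y" shows "lrank x < lrank y"
proof -
  obtain C where C: "C \<subseteq> {z. z \<le> x}" "is_chain C" "card C = lrank x + 1"
    using lrank_ex(1) by blast
  have "y \<notin> C" using C(1) assms by auto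
  have "insert y C \<subseteq> {z. z \<le> y}" using C(1) assms by auto
  moreover have "is_chain (insert y C)" using C(1,2) assms unfolding is_chain_def
    by auto
  ultimately have "card (insert y C) \<le> lrank y + 1" by (rule lrank_ex(2))
  thus ?thesis using C(3) \<open>y \<notin> C\<close> by simp
qed

lemma lrank_mono:
  fixes x y :: "'a::{finite,complete_lattice}"
  assumes "x \<le> y" shows "lrank x \<le> lrank y"
  using lrank_strict_mono[of x y] assms by (cases "x = y") (auto simp: less_le)

lemma lrank_eq_imp_eq:
  fixes x y :: "'a::{finite,complete_lattice}"
  assumes "x \<le> y" "lrank x = lrank y" shows "x = y"
  using lrank_strict_mono[of x y] assms by (cases "x = y") (auto simp: less_le)

lemma lrank_bot: "lrank (bot::'a::{finite,complete_lattice}) = 0"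
proof -
  obtain C where C: "C \<subseteq> {y::'a. y \<le> bot}" "is_chain C" "card C = lrank (bot::'a) + 1"
    using lrank_ex(1) by blast
  have "C \<subseteq> {bot}" using C(1) by (auto simp: bot_unique)
  hence "card C \<le> card {bot::'a}" by (intro card_mono) auto
  hence "card C \<le> 1" by simp
  thus ?thesis using C(3) by simp
qed

lemma geo_graded: "geometric_lattice TYPE('a::{finite,complete_lattice}) \<Longrightarrow> covers x y \<Longrightarrow> lrank y = lrank (x::'a) + 1"
  unfolding geometric_lattice_def graded_def by blast

lemma geo_semimod: "geometric_lattice TYPE('a::{finite,complete_lattice}) \<Longrightarrow>
   lrank (sup x y) + lrank (inf x y) \<le> lrank x + lrank (y::'a)"
  unfolding geometric_lattice_def semimodular_def by blast

lemma lrank_atom: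
  assumes "geometric_lattice TYPE('a::{finite,complete_lattice})" "is_atom (a::'a)"
  shows "lrank a = 1"
  using geo_graded[OF assms(1)] assms(2) lrank_bot unfolding is_atom_def by fastforce

lemma atom_le_or_inf:
  fixes a x :: "'a::complete_lattice"
  assumes "is_atom a" "\<not> a \<le> x" shows "inf x a = bot"
proof (rule ccontr)
  assume "inf x a \<noteq> bot"
  hence "bot < inf x a" by (simp add: bot.not_eq_extremum)
  moreover have "inf x a \<le> a" by simp
  ultimately have "inf x a = a" using assms(1) unfolding is_atom_def covers_def
    using le_less by blast
  thus False using assms(2) by (metis inf.cobounded1)
qed

lemma lrank_sup_atom:
  assumes g: "geometric_lattice TYPE('a::{finite,complete_lattice})" and a: "is_atom (a::'a)" "\<not> a \<le> x"
  shows "lrank (sup x a) = lrank x + 1"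
proof -
  have "lrank (sup x a) + lrank (inf x a) \<le> lrank x + lrank a" by (rule geo_semimod[OF g])
  hence le: "lrank (sup x a) \<le> lrank x + 1" using atom_le_or_inf[OF a] lrank_bot lrank_atom[OF g a(1)] by simp
  have "x < sup x a" using a(2) by (simp add: less_le) (metis sup.absorb_iff1 sup_ge2)
  hence "lrank x < lrank (sup x a)" by (rule lrank_strict_mono)
  thus ?thesis using le by simp
qed

lemma lrank_sup_atom_le:
  assumes g: "geometric_lattice TYPE('a::{finite,complete_lattice})" and a: "is_atom (a::'a)"
  shows "lrank (sup x a) \<le> lrank x + 1"
  using lrank_sup_atom[OF g a] by (cases "a \<le> x") (auto simp: sup.absorb1)

lemma lrank_Sup_union:
  fixes A D :: "'a::{finite,complete_lattice} set"
  assumes g: "geometric_lattice TYPE('a)" and at: "\<forall>a\<in>A. is_atom a"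
  shows "lrank (Sup (A \<union> D)) \<le> lrank (Sup D) + card A"
proof -
  have fA: "finite A" by simp
  show ?thesis using fA at
proof (induction A rule: finite_induct)
  case empty thus ?case by simp
next
  case (insert a A)
  have "Sup (insert a A \<union> D) = sup (Sup (A \<union> D)) a" by (simp add: sup_commute)
  hence "lrank (Sup (insert a A \<union> D)) \<le> lrank (Sup (A \<union> D)) + 1"
    using lrank_sup_atom_le[OF g] insert by simp
  thus ?case using insert by simp
qed
qed

lemma lrank_Sup_le_card:
  assumes g: "geometric_lattice TYPE('a::{finite,complete_lattice})" "\<forall>a\<in>A. is_atom (a::'a)"
  shows "lrank (Sup A) \<le> card A"
  using lrank_Sup_union[OF g(1) assms(2), where D="{}"] by (simp add: lrank_bot)

lemma indep_subset:
  assumes g: "geometric_lattice TYPE('a::{finite,complete_lattice})"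
    and I: "independent (B::'a set)" and D: "D \<subseteq> B"
  shows "independent D"
proof -
  have at: "\<forall>a\<in>B. is_atom a" using I unfolding independent_def by auto
  have "lrank (Sup ((B - D) \<union> D)) \<le> lrank (Sup D) + card (B - D)"
    using at by (intro lrank_Sup_union[OF g]) auto
  moreover have "(B - D) \<union> D = B" using D by auto
  moreover have "card B = card D + card (B - D)" using D
    by (metis add.commute card_Diff_subset card_mono finite le_add_diff_inverse2)
  ultimately have "card D \<le> lrank (Sup D)" using I unfolding independent_def by simp
  moreover have "lrank (Sup D) \<le> card D" using at D by (intro lrank_Sup_le_card[OF g]) auto
  ultimately show ?thesis using at D unfolding independent_def by auto
qed

lemma indep_le_Sup:
  assumes g: "geometric_lattice TYPE('a::{finite,complete_lattice})"
    and I: "independent (B::'a set)" and D: "D \<subseteq> B" and b: "b \<in> B" "b \<le> Sup D"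
  shows "b \<in> D"
proof (rule ccontr)
  assume nb: "b \<notin> D"
  have "independent (insert b D)" using D b by (intro indep_subset[OF g I]) auto
  moreover have "Sup (insert b D) = Sup D" using b by (simp add: sup.absorb2)
  moreover have "independent D" using D by (intro indep_subset[OF g I])
  ultimately show False using nb unfolding independent_def by simp
qed

lemma indep_inf_Sup:
  assumes g: "geometric_lattice TYPE('a::{finite,complete_lattice})"
    and I: "independent (B::'a set)" and D: "D \<subseteq> B" "D' \<subseteq> B"
  shows "inf (Sup D) (Sup D') = Sup (D \<inter> D')"
proof -
  have iD: "independent D" "independent D'" "independent (D \<union> D')" "independent (D \<inter> D')"
    using D by (auto intro: indep_subset[OF g I])
  have "lrank (sup (Sup D) (Sup D')) + lrank (inf (Sup D) (Sup D')) \<le> lrank (Sup D) + lrank (Sup D')"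
    by (rule geo_semimod[OF g])
  moreover have "sup (Sup D) (Sup D') = Sup (D \<union> D')" by (simp add: Sup_union_distrib)
  ultimately have "lrank (inf (Sup D) (Sup D')) + card (D \<union> D') \<le> card D + card D'"
    using iD unfolding independent_def by simp
  hence le: "lrank (inf (Sup D) (Sup D')) \<le> card (D \<inter> D')"
    using card_Un_Int[of D D'] by simp
  have sub: "Sup (D \<inter> D') \<le> inf (Sup D) (Sup D')"
    by (simp add: Sup_subset_mono)
  hence "lrank (Sup (D \<inter> D')) \<le> lrank (inf (Sup D) (Sup D'))" by (rule lrank_mono)
  hence "lrank (Sup (D \<inter> D')) = lrank (inf (Sup D) (Sup D'))" using le iD(4) unfolding independent_def by simp
  thus ?thesis using lrank_eq_imp_eq[OF sub] by simp
qed

lemma basis_indep: "is_basis B \<Longrightarrow> independent (B::'a::{finite,complete_lattice} set)"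
  unfolding is_basis_def independent_def by simp

locale gsetup =
  fixes w :: "'a::{finite,complete_lattice} \<Rightarrow> nat" and B :: "'a set"
  assumes g: "geometric_lattice TYPE('a)"
    and inj: "inj_on w {a. is_atom a}"
    and nbc: "nbc_basis w B"
begin

lemma basis: "is_basis B" using nbc unfolding nbc_basis_def by simp
lemma atB: "b \<in> B \<Longrightarrow> is_atom b" using basis unfolding is_basis_def by simp
lemma indB: "independent B" using basis by (rule basis_indep)
lemma SupB: "Sup B = top" using basis unfolding is_basis_def by simp
lemma cardB: "card B = lrank (top::'a)" using basis unfolding is_basis_def by simp

lemma winj: "is_atom a \<Longrightarrow> is_atom b \<Longrightarrow> w a = w b \<Longrightarrow> a = b"
  using inj unfolding inj_on_def by blast

lemma atom_not_bot: "is_atom a \<Longrightarrow> a \<noteq> bot"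
  unfolding is_atom_def covers_def by auto

definition supp :: "'a \<Rightarrow> 'a set" where
  "supp e = (SOME D. D \<subseteq> B \<and> e \<le> Sup D \<and> (\<forall>D'. D' \<subseteq> B \<longrightarrow> e \<le> Sup D' \<longrightarrow> D \<subseteq> D'))"

lemma supp_ex: "\<exists>D. D \<subseteq> B \<and> e \<le> Sup D \<and> (\<forall>D'. D' \<subseteq> B \<longrightarrow> e \<le> Sup D' \<longrightarrow> D \<subseteq> D')"
proof -
  have "B \<subseteq> B \<and> e \<le> Sup B" using SupB by simp
  then obtain D where D: "D \<subseteq> B \<and> e \<le> Sup D"
    and mn: "\<forall>y. y \<subseteq> B \<and> e \<le> Sup y \<longrightarrow> card D \<le> card y"
    using ex_has_least_nat[where P="\<lambda>D. D \<subseteq> B \<and> e \<le> Sup D" and m=card] by blast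
  have "D \<subseteq> D'" if "D' \<subseteq> B" "e \<le> Sup D'" for D'
  proof -
    have "inf (Sup D) (Sup D') = Sup (D \<inter> D')" using D that by (intro indep_inf_Sup[OF g indB]) auto
    hence "e \<le> Sup (D \<inter> D')" using D that by (metis le_inf_iff)
    moreover have "D \<inter> D' \<subseteq> B" using D by auto
    ultimately have "card D \<le> card (D \<inter> D')" using mn by blast
    hence "D \<inter> D' = D" using card_mono[of D "D \<inter> D'"] by (intro card_subset_eq) auto
    thus ?thesis by auto
  qed
  thus ?thesis using D by blast
qed

lemma supp_props: "supp e \<subseteq> B" "e \<le> Sup (supp e)"
  "D' \<subseteq> B \<Longrightarrow> e \<le> Sup D' \<Longrightarrow> supp e \<subseteq> D'"
  using someI_ex[OF supp_ex[of e]] unfolding supp_def[symmetric] by blast+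

lemma supp_iff: "D \<subseteq> B \<Longrightarrow> e \<le> Sup D \<longleftrightarrow> supp e \<subseteq> D"
  using supp_props by (meson Sup_subset_mono order_trans)

lemma supp_ne: "is_atom e \<Longrightarrow> supp e \<noteq> {}"
  using supp_props(2)[of e] atom_not_bot[of e] by (auto simp: bot_unique)

lemma supp_B: "e \<in> B \<Longrightarrow> supp e = {e}"
proof -
  assume e: "e \<in> B"
  have "supp e \<subseteq> {e}" using e by (intro supp_props(3)) auto
  thus ?thesis using supp_ne[OF atB[OF e]] by auto
qed

lemma supp_fin: "finite (supp e)" by simp

lemma w_ne: "b \<in> B \<Longrightarrow> is_atom e \<Longrightarrow> e \<notin> B \<Longrightarrow> w b \<noteq> w e"
  using winj atB by metis

lemma nbc_lower:
  assumes e: "is_atom e" "e \<notin> B"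
  shows "\<exists>b\<in>supp e. w b < w e"
proof (rule ccontr)
  assume "\<not> ?thesis"
  hence ge: "\<forall>b\<in>supp e. w e \<le> w b" by auto
  let ?S = "supp e"
  let ?C = "insert e ?S"
  have eS: "e \<notin> ?S" using supp_props(1) e by auto
  have indS: "independent ?S" using supp_props(1) by (rule indep_subset[OF g indB])
  have atC: "\<forall>a\<in>?C. is_atom a" using e supp_props(1) atB by auto
  have "Sup ?C = Sup ?S" using supp_props(2)[of e] by (simp add: sup.absorb2)
  hence nind: "\<not> independent ?C" using indS eS unfolding independent_def by simp
  have allind: "independent D" if D: "D \<subset> ?C" for D
  proof (cases "e \<in> D")
    case False
    hence "D \<subseteq> ?S" using D by auto
    thus ?thesis using supp_props(1) by (intro indep_subset[OF g indB]) auto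
  next
    case True
    let ?D' = "D - {e}"
    have D'S: "?D' \<subset> ?S" using D True eS by auto
    have indD': "independent ?D'" using D'S supp_props(1) by (intro indep_subset[OF g indB]) auto
    have "\<not> e \<le> Sup ?D'"
    proof
      assume "e \<le> Sup ?D'"
      hence "?S \<subseteq> ?D'" using D'S supp_props(1) by (intro supp_props(3)) auto
      thus False using D'S by auto
    qed
    hence r1: "lrank (sup (Sup ?D') e) = lrank (Sup ?D') + 1" by (rule lrank_sup_atom[OF g e(1)])
    have DD: "D = insert e ?D'" using insert_Diff[OF True] by simp
    have "Sup D = sup e (Sup ?D')" by (subst DD) (rule Complete_Lattices.Sup_insert)
    hence r2: "Sup D = sup (Sup ?D') e" by (simp add: sup_commute)
    have "card D > 0" using True by (auto simp: card_gt_0_iff)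
    hence r3: "card D = card ?D' + 1" using True by (simp add: card_Diff_singleton)
    have r4: "lrank (Sup ?D') = card ?D'" using indD' unfolding independent_def by blast
    have "lrank (Sup D) = card D" using r1 r2 r3 r4 by simp
    moreover have "\<forall>a\<in>D. is_atom a" using atC D by blast
    ultimately show ?thesis unfolding independent_def by blast
  qed
  have circ: "is_circuit ?C" unfolding is_circuit_def using atC nind allind by blast
  have am: "arg_min_on w ?C = e"
  proof -
    let ?m = "arg_min_on w ?C"
    have "?m \<in> ?C" "w ?m \<le> w e"
      using arg_min_nat_lemma[of "\<lambda>x. x \<in> ?C" e w] unfolding arg_min_on_def by auto
    show ?thesis
    proof (rule ccontr)
      assume ne: "?m \<noteq> e"
      hence "?m \<in> ?S" using \<open>?m \<in> ?C\<close> by simp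
      hence "w e \<le> w ?m" using ge by blast
      hence "w ?m = w e" using \<open>w ?m \<le> w e\<close> by simp
      moreover have "is_atom ?m" using atC \<open>?m \<in> ?C\<close> by blast
      ultimately show False using winj[of ?m e] e(1) ne by blast
    qed
  qed
  have "broken_circuit w ?S" unfolding broken_circuit_def
    by (rule exI[of _ ?C]) (use circ am eS in auto)
  thus False using nbc supp_props(1) unfolding nbc_basis_def by blast
qed

lemma sorted_split_less:
  fixes xs :: "nat list"
  assumes "sorted xs" "distinct xs" "xs = u @ b # v"
  shows "set u = {x \<in> set xs. x < b}"
proof -
  have "\<forall>x\<in>set u. x < b" using assms by (auto simp: sorted_append less_le)
  moreover have "\<forall>x\<in>set v. b < x" using assms by (auto simp: sorted_append less_le)
  ultimately show ?thesis using assms(3) by auto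
qed

lemma lex_upper:
  assumes "\<exists>B'. nbc_basis w B' \<and> lex_less w B' B"
  shows "\<exists>e. is_atom e \<and> e \<notin> B \<and> (\<exists>d\<in>supp e. w e < w d)"
proof (rule ccontr)
  assume neg: "\<not> ?thesis"
  have H: "w d < w e" if "is_atom e" "e \<notin> B" "d \<in> supp e" for e d
  proof -
    have "d \<in> B" using that(3) supp_props(1) by auto
    hence "w d \<noteq> w e" using w_ne that by blast
    moreover have "\<not> w e < w d" using neg that by blast
    ultimately show ?thesis by simp
  qed
  obtain B' where B': "nbc_basis w B'" "lex_less w B' B" using assms by blast
  have basB': "is_basis B'" using B' unfolding nbc_basis_def by simp
  have atB': "\<And>b. b \<in> B' \<Longrightarrow> is_atom b" using basB' unfolding is_basis_def by simp
  have indB': "independent B'" using basB' by (rule basis_indep)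
  have injB: "inj_on w B" using inj atB by (meson inj_on_subset mem_Collect_eq subsetI)
  have injB': "inj_on w B'" using inj atB' by (meson inj_on_subset mem_Collect_eq subsetI)
  define xs where "xs = sorted_list_of_set (w ` B')"
  define ys where "ys = sorted_list_of_set (w ` B)"
  have sx: "sorted xs" "distinct xs" "set xs = w ` B'" "length xs = card B'"
    unfolding xs_def using card_image[OF injB'] by auto
  have sy: "sorted ys" "distinct ys" "set ys = w ` B" "length ys = card B"
    unfolding ys_def using card_image[OF injB] by auto
  have lenEq: "length xs = length ys" using sx sy basB' cardB unfolding is_basis_def by simp
  have "(xs, ys) \<in> lexord {(a, b). a < b}" using B'(2) unfolding lex_less_def xs_def ys_def .
  then have "(\<exists>a v. ys = xs @ a # v) \<or> (\<exists>u a b v v'. (a, b) \<in> {(a, b). a < b} \<and> xs = u @ a # v \<and> ys = u @ b # v')"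
    unfolding lexord_def by blast
  moreover have "\<not> (\<exists>a v. ys = xs @ a # v)"
  proof
    assume "\<exists>a v. ys = xs @ a # v"
    then obtain a v where "ys = xs @ a # v" by blast
    hence "length ys > length xs" by simp
    thus False using lenEq by simp
  qed
  ultimately obtain u a b v v' where ab: "a < b" "xs = u @ a # v" "ys = u @ b # v'"
    by blast
  have uy: "set u = {x \<in> set ys. x < b}" by (rule sorted_split_less[OF sy(1,2) ab(3)])
  have ux: "set u = {x \<in> set xs. x < a}" by (rule sorted_split_less[OF sx(1,2) ab(2)])
  have "a \<in> set xs" using ab(2) by simp
  hence "a \<in> w ` B'" using sx(3) by simp
  then obtain a' where a': "a' \<in> B'" "w a' = a" by blast
  have "a' \<notin> B"
  proof
    assume "a' \<in> B"
    hence "a \<in> set u" using uy sy(3) a' ab(1) by auto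
    thus False using ux by auto
  qed
  have "supp a' \<subseteq> {x \<in> B'. w x < w a'}"
  proof
    fix d assume d: "d \<in> supp a'"
    have dB: "d \<in> B" using d supp_props(1) by auto
    have lt: "w d < w a'" using H[OF atB'[OF a'(1)] \<open>a' \<notin> B\<close> d] .
    hence "w d \<in> set u" using uy sy(3) dB a' ab(1) by auto
    hence "w d \<in> w ` B'" using ux sx(3) by auto
    then obtain d' where "d' \<in> B'" "w d' = w d" by auto
    hence "d' = d" using winj[OF atB'[OF \<open>d' \<in> B'\<close>] atB[OF dB]] by blast
    thus "d \<in> {x \<in> B'. w x < w a'}" using \<open>d' \<in> B'\<close> lt by auto
  qed
  hence "Sup (supp a') \<le> Sup {x \<in> B'. w x < w a'}" by (rule Sup_subset_mono)
  hence "a' \<le> Sup {x \<in> B'. w x < w a'}" using supp_props(2)[of a'] by (rule order_trans[rotated])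
  moreover have sub: "{x \<in> B'. w x < w a'} \<subseteq> B'" by blast
  ultimately have "a' \<in> {x \<in> B'. w x < w a'}" using indep_le_Sup[OF g indB' sub a'(1)] by blast
  thus False by simp
qed

end

context gsetup begin

abbreviation "n \<equiv> card B"

definition ordering :: "'a list \<Rightarrow> bool" where
  "ordering bs \<longleftrightarrow> distinct bs \<and> set bs = B"

lemma ord_len: "ordering bs \<Longrightarrow> length bs = n"
  unfolding ordering_def using distinct_card by fastforce

lemma ord_take_sub: "ordering bs \<Longrightarrow> set (take i bs) \<subseteq> B"
  unfolding ordering_def using set_take_subset by fastforce

lemma ord_nth: "ordering bs \<Longrightarrow> m < n \<Longrightarrow> bs ! m \<in> B"
  using ord_len unfolding ordering_def by (metis nth_mem)

lemma ord_idx: "ordering bs \<Longrightarrow> b \<in> B \<Longrightarrow> \<exists>m<n. b = bs ! m"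
  using ord_len unfolding ordering_def by (metis in_set_conv_nth)

lemma ord_nth_inj: "ordering bs \<Longrightarrow> j < n \<Longrightarrow> k < n \<Longrightarrow> bs ! j = bs ! k \<Longrightarrow> j = k"
  using ord_len unfolding ordering_def by (metis nth_eq_iff_index_eq)

lemma ord_in_take: "ordering bs \<Longrightarrow> m < n \<Longrightarrow> bs ! m \<in> set (take i bs) \<longleftrightarrow> m < i"
proof -
  assume o: "ordering bs" and m: "m < n"
  have len: "length bs = n" using ord_len[OF o] .
  show ?thesis
  proof
    assume "bs ! m \<in> set (take i bs)"
    then obtain j where j: "j < length (take i bs)" "take i bs ! j = bs ! m" by (auto simp: in_set_conv_nth)
    hence "j < i" "j < n" "bs ! j = bs ! m" using len by auto
    thus "m < i" using ord_nth_inj[OF o _ m] by metis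
  next
    assume "m < i"
    hence "take i bs ! m = bs ! m" "m < length (take i bs)" using m len by auto
    thus "bs ! m \<in> set (take i bs)" by (metis nth_mem)
  qed
qed

lemma pj_rank: "ordering bs \<Longrightarrow> i \<le> n \<Longrightarrow> lrank (pjoin bs i) = i"
proof -
  assume o: "ordering bs" and i: "i \<le> n"
  have "independent (set (take i bs))" using ord_take_sub[OF o] by (rule indep_subset[OF g indB])
  moreover have "card (set (take i bs)) = i"
    using o i ord_len[OF o] unfolding ordering_def by (simp add: distinct_card)
  ultimately show ?thesis unfolding pjoin_def independent_def by simp
qed

lemma pj_mono: "i \<le> j \<Longrightarrow> pjoin bs i \<le> pjoin bs j"
  unfolding pjoin_def by (rule Sup_subset_mono, rule set_take_subset_set_take)

lemma pj_supp: "ordering bs \<Longrightarrow> e \<le> pjoin bs i \<longleftrightarrow> supp e \<subseteq> set (take i bs)"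
  unfolding pjoin_def by (rule supp_iff[OF ord_take_sub])

lemma pj_Suc: "ordering bs \<Longrightarrow> i < n \<Longrightarrow> pjoin bs (Suc i) = sup (pjoin bs i) (bs ! i)"
proof -
  assume o: "ordering bs" and i: "i < n"
  have "take (Suc i) bs = take i bs @ [bs ! i]" using i ord_len[OF o] by (simp add: take_Suc_conv_app_nth)
  hence "set (take (Suc i) bs) = insert (bs ! i) (set (take i bs))" by simp
  hence "pjoin bs (Suc i) = sup (bs ! i) (pjoin bs i)" unfolding pjoin_def
    by (simp add: Complete_Lattices.Sup_insert)
  thus ?thesis by (simp add: sup_commute)
qed

lemma pj_nth_le: "ordering bs \<Longrightarrow> m < n \<Longrightarrow> bs ! m \<le> pjoin bs i \<longleftrightarrow> m < i"
proof -
  assume o: "ordering bs" and m: "m < n"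
  show ?thesis
  proof
    assume "bs ! m \<le> pjoin bs i"
    hence "bs ! m \<in> set (take i bs)" unfolding pjoin_def
      using indep_le_Sup[OF g indB ord_take_sub[OF o] ord_nth[OF o m]] by blast
    thus "m < i" using ord_in_take[OF o m] by blast
  next
    assume "m < i"
    hence "bs ! m \<in> set (take i bs)" using ord_in_take[OF o m] by blast
    thus "bs ! m \<le> pjoin bs i" unfolding pjoin_def by (rule Sup_upper)
  qed
qed

lemma good_iff:
  assumes o: "ordering bs"
  shows "minlab_eq_basislab w bs \<longleftrightarrow>
    (\<forall>i<n. \<forall>a. is_atom a \<longrightarrow> a \<le> pjoin bs (Suc i) \<longrightarrow> \<not> a \<le> pjoin bs i \<longrightarrow> w (bs ! i) \<le> w a)"
proof -
  have len: "length bs = n" using ord_len[OF o] .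
  have key: "minlab w (pjoin bs i) (pjoin bs (Suc i)) = bs ! i \<longleftrightarrow>
     (\<forall>a. is_atom a \<longrightarrow> a \<le> pjoin bs (Suc i) \<longrightarrow> \<not> a \<le> pjoin bs i \<longrightarrow> w (bs ! i) \<le> w a)"
    if i: "i < n" for i
  proof -
    let ?x = "pjoin bs i" and ?y = "pjoin bs (Suc i)"
    have rx: "lrank ?x = i" using pj_rank[OF o] i by simp
    have ry: "lrank ?y = Suc i" using pj_rank[OF o] i by simp
    have xy: "?x \<le> ?y" by (rule pj_mono) simp
    have P: "sup ?x a = ?y \<longleftrightarrow> a \<le> ?y \<and> \<not> a \<le> ?x" if a: "is_atom a" for a
    proof
      assume s: "sup ?x a = ?y"
      have "a \<le> ?y" using s by (metis sup_ge2)
      moreover have "\<not> a \<le> ?x"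
      proof
        assume "a \<le> ?x"
        hence "sup ?x a = ?x" by (simp add: sup.absorb1)
        thus False using s rx ry by simp
      qed
      ultimately show "a \<le> ?y \<and> \<not> a \<le> ?x" by simp
    next
      assume h: "a \<le> ?y \<and> \<not> a \<le> ?x"
      have le: "sup ?x a \<le> ?y" using h xy by simp
      have "lrank (sup ?x a) = lrank ?x + 1" using lrank_sup_atom[OF g a] h by blast
      hence "lrank (sup ?x a) = lrank ?y" using rx ry by simp
      thus "sup ?x a = ?y" using lrank_eq_imp_eq[OF le] by simp
    qed
    have atbi: "is_atom (bs ! i)" using atB ord_nth[OF o i] by blast
    have Pbi: "sup ?x (bs ! i) = ?y" using pj_Suc[OF o i] by simp
    let ?Q = "\<lambda>a. is_atom a \<and> sup ?x a = ?y"
    have Qbi: "?Q (bs ! i)" using atbi Pbi by simp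
    have mq: "?Q (minlab w ?x ?y)" "w (minlab w ?x ?y) \<le> w (bs ! i)"
      unfolding minlab_def using arg_min_nat_lemma[of ?Q "bs ! i" w, OF Qbi] Qbi by blast+
    have mle: "\<And>a. ?Q a \<Longrightarrow> w (minlab w ?x ?y) \<le> w a"
      unfolding minlab_def by (rule arg_min_nat_le)
    show ?thesis
    proof
      assume eq: "minlab w ?x ?y = bs ! i"
      show "\<forall>a. is_atom a \<longrightarrow> a \<le> ?y \<longrightarrow> \<not> a \<le> ?x \<longrightarrow> w (bs ! i) \<le> w a"
        using mle P eq by metis
    next
      assume h: "\<forall>a. is_atom a \<longrightarrow> a \<le> ?y \<longrightarrow> \<not> a \<le> ?x \<longrightarrow> w (bs ! i) \<le> w a"
      have "w (bs ! i) \<le> w (minlab w ?x ?y)" using h mq(1) P by blast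
      hence "w (minlab w ?x ?y) = w (bs ! i)" using mq(2) by simp
      thus "minlab w ?x ?y = bs ! i" using winj[OF _ atbi] mq(1) by blast
    qed
  qed
  show ?thesis unfolding minlab_eq_basislab_def using key len by simp
qed

definition cons :: "(real, 'a) vec \<Rightarrow> bool" where
  "cons t \<longleftrightarrow> (\<forall>e. is_atom e \<longrightarrow> (\<exists>b\<in>supp e. w b \<le> w e \<and> (\<forall>b'\<in>supp e. t$b \<le> t$b')))"

definition noninc :: "'a list \<Rightarrow> (real, 'a) vec \<Rightarrow> bool" where
  "noninc bs t \<longleftrightarrow> (\<forall>j k. j \<le> k \<longrightarrow> k < n \<longrightarrow> t$(bs!k) \<le> t$(bs!j))"

lemma good_cons:
  assumes o: "ordering bs" and gd: "minlab_eq_basislab w bs" and ni: "noninc bs t"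
  shows "cons t"
  unfolding cons_def
proof (intro allI impI)
  fix e :: 'a assume e: "is_atom e"
  have G: "\<And>i a. i < n \<Longrightarrow> is_atom a \<Longrightarrow> a \<le> pjoin bs (Suc i) \<Longrightarrow> \<not> a \<le> pjoin bs i \<Longrightarrow> w (bs ! i) \<le> w a"
    using gd good_iff[OF o] by blast
  let ?I = "{i. i < n \<and> bs ! i \<in> supp e}"
  have ne: "?I \<noteq> {}"
  proof -
    obtain b where "b \<in> supp e" using supp_ne[OF e] by blast
    moreover then obtain m where "m < n" "b = bs ! m" using ord_idx[OF o] supp_props(1) by blast
    ultimately show ?thesis by blast
  qed
  have fI: "finite ?I" by simp
  have iI: "Max ?I \<in> ?I" using fI ne by (rule Max_in)
  define i where "i = Max ?I"
  have i: "i < n" "bs ! i \<in> supp e" using iI i_def by auto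
  have le_i: "\<And>j. j < n \<Longrightarrow> bs ! j \<in> supp e \<Longrightarrow> j \<le> i"
    unfolding i_def by (rule Max_ge) auto
  have sub: "supp e \<subseteq> set (take (Suc i) bs)"
  proof
    fix b assume b: "b \<in> supp e"
    then obtain m where m: "m < n" "b = bs ! m" using ord_idx[OF o] supp_props(1) by blast
    hence "m \<le> i" using le_i b by blast
    thus "b \<in> set (take (Suc i) bs)" using ord_in_take[OF o m(1)] m by simp
  qed
  have nsub: "\<not> supp e \<subseteq> set (take i bs)" using i ord_in_take[OF o i(1)] by blast
  have "w (bs ! i) \<le> w e"
    using G[OF i(1) e] sub nsub pj_supp[OF o] by blast
  moreover have "\<forall>b'\<in>supp e. t$(bs ! i) \<le> t$b'"
  proof
    fix b' assume b': "b' \<in> supp e"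
    then obtain m where m: "m < n" "b' = bs ! m" using ord_idx[OF o] supp_props(1) by blast
    hence "m \<le> i" using le_i b' by blast
    thus "t$(bs ! i) \<le> t$b'" using ni i(1) m unfolding noninc_def by blast
  qed
  ultimately show "\<exists>b\<in>supp e. w b \<le> w e \<and> (\<forall>b'\<in>supp e. t$b \<le> t$b')" using i(2) by blast
qed

definition keyord :: "'a list \<Rightarrow> (real, 'a) vec \<Rightarrow> bool" where
  "keyord bs t \<longleftrightarrow> (\<forall>j k. j < k \<longrightarrow> k < n \<longrightarrow>
      t$(bs!k) < t$(bs!j) \<or> (t$(bs!k) = t$(bs!j) \<and> w (bs!k) < w (bs!j)))"

lemma keyord_noninc: "keyord bs t \<Longrightarrow> noninc bs t"
  unfolding keyord_def noninc_def by (metis le_less order.refl)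

lemma cons_good:
  assumes o: "ordering bs" and ko: "keyord bs t" and c: "cons t"
  shows "minlab_eq_basislab w bs"
  unfolding good_iff[OF o]
proof (intro allI impI)
  fix i a assume i: "i < n" and a: "is_atom a" "a \<le> pjoin bs (Suc i)" "\<not> a \<le> pjoin bs i"
  have s1: "supp a \<subseteq> set (take (Suc i) bs)" using a(2) pj_supp[OF o] by blast
  have s2: "\<not> supp a \<subseteq> set (take i bs)" using a(3) pj_supp[OF o] by blast
  have tk: "take (Suc i) bs = take i bs @ [bs ! i]" using i ord_len[OF o] by (simp add: take_Suc_conv_app_nth)
  have bi: "bs ! i \<in> supp a" using s1 s2 tk by auto
  obtain b where b: "b \<in> supp a" "w b \<le> w a" "\<forall>b'\<in>supp a. t$b \<le> t$b'" using c a(1) unfolding cons_def by blast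
  have tb: "t$b \<le> t$(bs ! i)" using b(3) bi by blast
  obtain j where j: "j < n" "b = bs ! j" using ord_idx[OF o] supp_props(1) b(1) by blast
  have "b \<in> set (take (Suc i) bs)" using s1 b(1) by blast
  hence "j < Suc i" using ord_in_take[OF o j(1)] j(2) by simp
  show "w (bs ! i) \<le> w a"
  proof (cases "j = i")
    case True thus ?thesis using b(2) j(2) by simp
  next
    case False
    hence "j < i" using \<open>j < Suc i\<close> by simp
    hence "t$(bs!i) < t$(bs!j) \<or> (t$(bs!i) = t$(bs!j) \<and> w (bs!i) < w (bs!j))"
      using ko i unfolding keyord_def by blast
    thus ?thesis using tb j(2) b(2) by auto
  qed
qed

end

lemma sort_exists:
  fixes R :: "'b \<Rightarrow> 'b \<Rightarrow> bool"
  assumes fin: "finite A" and irr: "\<forall>x\<in>A. \<not> R x x"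
    and tot: "\<forall>x\<in>A. \<forall>y\<in>A. x \<noteq> y \<longrightarrow> R x y \<or> R y x"
    and tr: "\<forall>x\<in>A. \<forall>y\<in>A. \<forall>z\<in>A. R x y \<longrightarrow> R y z \<longrightarrow> R x z"
  shows "\<exists>xs. distinct xs \<and> set xs = A \<and> sorted_wrt R xs"
proof -
  define k where "k x = card {c\<in>A. R c x}" for x
  have mono: "k x < k y" if xy: "x \<in> A" "y \<in> A" "R x y" for x y
  proof -
    have "{c\<in>A. R c x} \<subset> {c\<in>A. R c y}"
    proof
      show "{c\<in>A. R c x} \<subseteq> {c\<in>A. R c y}" using tr xy by blast
      show "{c\<in>A. R c x} \<noteq> {c\<in>A. R c y}" using irr xy by blast
    qed
    thus ?thesis unfolding k_def using fin by (intro psubset_card_mono) auto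
  qed
  have kback: "R x y" if xy: "x \<in> A" "y \<in> A" "k x < k y" for x y
  proof -
    have "x \<noteq> y" using xy by auto
    hence "R x y \<or> R y x" using tot xy by blast
    thus ?thesis using mono[of y x] xy by auto
  qed
  have injk: "inj_on k A"
  proof (rule inj_onI)
    fix x y assume "x \<in> A" "y \<in> A" "k x = k y"
    thus "x = y" using tot mono by (metis less_irrefl)
  qed
  define ks where "ks = sorted_list_of_set (k ` A)"
  define xs where "xs = map (inv_into A k) ks"
  have sks: "sorted_wrt (<) ks" "set ks = k ` A" "distinct ks" unfolding ks_def using fin by auto
  have setxs: "set xs = A" unfolding xs_def using sks(2) injk by (simp add: image_image inv_into_f_f)
  have "inj_on (inv_into A k) (set ks)" using sks(2) by (simp add: inj_on_inv_into)
  hence dxs: "distinct xs" unfolding xs_def using sks(3) by (simp add: distinct_map)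
  have "sorted_wrt R xs"
    unfolding sorted_wrt_iff_nth_less
  proof (intro allI impI)
    fix i j assume ij: "i < j" "j < length xs"
    have lk: "length xs = length ks" unfolding xs_def by simp
    have "ks ! i < ks ! j" using sorted_wrt_nth_less[OF sks(1) ij(1)] ij lk by simp
    moreover have "ks ! i \<in> k ` A" "ks ! j \<in> k ` A" using ij lk sks(2) by (metis nth_mem order.strict_trans)+
    moreover have "xs ! i = inv_into A k (ks ! i)" "xs ! j = inv_into A k (ks ! j)"
      using ij lk unfolding xs_def by auto
    ultimately show "R (xs ! i) (xs ! j)"
      using kback by (metis f_inv_into_f inv_into_into)
  qed
  thus ?thesis using dxs setxs by blast
qed

context gsetup begin

definition Lm :: "(real, 'a) vec \<Rightarrow> (real, 'a) vec" where
  "Lm y = (\<chi> b. if b \<in> B then (\<Sum>v\<in>{v. b \<le> v}. y$v) else 0)"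

definition lam :: "'a list \<Rightarrow> (real, 'a) vec \<Rightarrow> nat \<Rightarrow> real" where
  "lam bs t i = t$(bs!(i-1)) - t$(bs!i)"

definition Yv :: "'a list \<Rightarrow> (real, 'a) vec \<Rightarrow> (real, 'a) vec" where
  "Yv bs t = (\<Sum>i\<in>{1..<n}. lam bs t i *\<^sub>R axis (pjoin bs i) 1)"

definition Good :: "(real, 'a) vec \<Rightarrow> bool" where
  "Good t \<longleftrightarrow> (\<forall>v. v \<notin> B \<longrightarrow> t$v = 0) \<and> (\<forall>b\<in>B. 0 \<le> t$b \<and> t$b \<le> 1)
     \<and> (\<exists>b\<in>B. t$b = 1) \<and> (\<exists>b\<in>B. t$b = 0) \<and> cons t"

lemma Lm_comb:
  "Lm (\<Sum>i\<in>I. l i *\<^sub>R axis (x i) 1) $ b = (if b \<in> B then (\<Sum>i\<in>I. if b \<le> x i then l i else 0) else 0)"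
proof -
  have "(\<Sum>v\<in>{v. b \<le> v}. (\<Sum>i\<in>I. l i *\<^sub>R axis (x i) 1) $ v)
      = (\<Sum>v\<in>{v. b \<le> v}. \<Sum>i\<in>I. (if v = x i then l i else 0))"
    by (auto simp: sum_component axis_def intro!: sum.cong)
  also have "\<dots> = (\<Sum>i\<in>I. \<Sum>v\<in>{v. b \<le> v}. (if v = x i then l i else 0))"
    by (rule sum.swap)
  also have "\<dots> = (\<Sum>i\<in>I. if b \<le> x i then l i else 0)"
    by (rule sum.cong) (simp_all add: sum.delta')
  finally show ?thesis unfolding Lm_def by simp
qed

lemma pj_inj: "ordering bs \<Longrightarrow> i \<le> n \<Longrightarrow> j \<le> n \<Longrightarrow> pjoin bs i = pjoin bs j \<Longrightarrow> i = j"
  using pj_rank by metis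

lemma facet_eq: "ordering bs \<Longrightarrow> assoc_facet bs = pjoin bs ` {1..<n}"
  unfolding assoc_facet_def using ord_len by auto

lemma hull_rep:
  assumes o: "ordering bs" and y: "y \<in> convex hull ((\<lambda>v. axis v 1) ` assoc_facet bs)"
  shows "\<exists>l. (\<forall>i\<in>{1..<n}. 0 \<le> l i) \<and> sum l {1..<n} = 1 \<and> y = (\<Sum>i\<in>{1..<n}. l i *\<^sub>R axis (pjoin bs i) (1::real))"
proof -
  let ?f = "\<lambda>i. axis (pjoin bs i) (1::real)"
  have img: "(\<lambda>v. axis v 1) ` assoc_facet bs = ?f ` {1..<n}"
    unfolding facet_eq[OF o] by (simp add: image_image)
  have inj: "inj_on ?f {1..<n}"
    by (rule inj_onI) (use pj_inj[OF o] in \<open>auto simp: axis_eq_axis\<close>)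
  obtain u where u: "\<forall>x\<in>?f ` {1..<n}. 0 \<le> u x" "sum u (?f ` {1..<n}) = 1"
    "(\<Sum>x\<in>?f ` {1..<n}. u x *\<^sub>R x) = y"
    using y unfolding img convex_hull_finite[OF finite_imageI[OF finite_atLeastLessThan]] by blast
  show ?thesis
    apply (rule exI[of _ "\<lambda>i. u (?f i)"])
    using u unfolding sum.reindex[OF inj] by auto
qed

lemma tele: "m < N \<Longrightarrow> (\<Sum>i\<in>{Suc m..<N}. (f (i - 1) - f i :: real)) = f m - f (N - 1)"
proof (induction N)
  case 0 thus ?case by simp
next
  case (Suc N)
  show ?case
  proof (cases "m < N")
    case True
    have "(\<Sum>i\<in>{Suc m..<Suc N}. f (i - 1) - f i) = (\<Sum>i\<in>{Suc m..<N}. f (i - 1) - f i) + (f (N - 1) - f N)"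
      using True by simp
    thus ?thesis using Suc True by simp
  next
    case False
    hence "m = N" using Suc by simp
    thus ?thesis by simp
  qed
qed

lemma facet_point:
  assumes o: "ordering bs" and n1: "1 \<le> n"
    and l: "\<forall>i\<in>{1..<n}. 0 \<le> l i" "sum l {1..<n} = 1"
    and y: "y = (\<Sum>i\<in>{1..<n}. l i *\<^sub>R axis (pjoin bs i) (1::real))"
  shows "\<And>m. m < n \<Longrightarrow> Lm y $ (bs!m) = (\<Sum>i\<in>{Suc m..<n}. l i)"
    and "noninc bs (Lm y)"
    and "Yv bs (Lm y) = y"
    and "\<forall>v. v \<notin> B \<longrightarrow> Lm y $ v = 0"
    and "Lm y $ (bs!0) = 1" "Lm y $ (bs!(n-1)) = 0"
    and "\<forall>b\<in>B. 0 \<le> Lm y $ b \<and> Lm y $ b \<le> 1"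
proof -
  show tm: "Lm y $ (bs!m) = (\<Sum>i\<in>{Suc m..<n}. l i)" if m: "m < n" for m
  proof -
    have "Lm y $ (bs!m) = (\<Sum>i\<in>{1..<n}. if bs!m \<le> pjoin bs i then l i else 0)"
      unfolding y Lm_comb using ord_nth[OF o m] by simp
    also have "\<dots> = (\<Sum>i\<in>{1..<n}. if Suc m \<le> i then l i else 0)"
      by (rule sum.cong) (use pj_nth_le[OF o m] in auto)
    also have "\<dots> = (\<Sum>i\<in>{i\<in>{1..<n}. Suc m \<le> i}. l i)"
      by (rule sum.inter_filter[symmetric], simp)
    also have "{i\<in>{1..<n}. Suc m \<le> i} = {Suc m..<n}" by auto
    finally show ?thesis .
  qed
  show "noninc bs (Lm y)" unfolding noninc_def
  proof (intro allI impI)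
    fix j k assume jk: "j \<le> k" "k < n"
    have "(\<Sum>i\<in>{Suc k..<n}. l i) \<le> (\<Sum>i\<in>{Suc j..<n}. l i)"
      by (rule sum_mono2) (use jk l(1) in auto)
    thus "Lm y $ (bs!k) \<le> Lm y $ (bs!j)" using tm jk by simp
  qed
  have lamv: "lam bs (Lm y) i = l i" if i: "i \<in> {1..<n}" for i
  proof -
    have i1: "i - 1 < n" using i by auto
    have "Suc (i - 1) = i" using i by auto
    hence "Lm y $ (bs!(i-1)) = (\<Sum>j\<in>{i..<n}. l j)" using tm[OF i1] by simp
    moreover have "Lm y $ (bs!i) = (\<Sum>j\<in>{Suc i..<n}. l j)" using tm[of i] i by simp
    moreover have "(\<Sum>j\<in>{i..<n}. l j) = l i + (\<Sum>j\<in>{Suc i..<n}. l j)" using i by (simp add: sum.atLeast_Suc_lessThan)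
    ultimately show ?thesis unfolding lam_def by simp
  qed
  show "Yv bs (Lm y) = y" unfolding Yv_def y[symmetric] using lamv
    by (simp add: y) 
  show "\<forall>v. v \<notin> B \<longrightarrow> Lm y $ v = 0" unfolding Lm_def by simp
  show "Lm y $ (bs!0) = 1" using tm[of 0] n1 l(2) by simp
  show "Lm y $ (bs!(n-1)) = 0" using tm[of "n-1"] n1 by simp
  show "\<forall>b\<in>B. 0 \<le> Lm y $ b \<and> Lm y $ b \<le> 1"
  proof
    fix b assume "b \<in> B"
    then obtain m where m: "m < n" "b = bs!m" using ord_idx[OF o] by blast
    have "0 \<le> (\<Sum>i\<in>{Suc m..<n}. l i)" by (rule sum_nonneg) (use l(1) in auto)
    moreover have "(\<Sum>i\<in>{Suc m..<n}. l i) \<le> (\<Sum>i\<in>{1..<n}. l i)"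
      by (rule sum_mono2) (use l(1) in auto)
    ultimately show "0 \<le> Lm y $ b \<and> Lm y $ b \<le> 1" using tm m l(2) by simp
  qed
qed

end

context gsetup begin

lemma real_mem:
  assumes "y \<in> realization (Delta w B)"
  shows "\<exists>bs. ordering bs \<and> minlab_eq_basislab w bs \<and> y \<in> convex hull ((\<lambda>v. axis v 1) ` assoc_facet bs)"
proof -
  obtain \<sigma> where s: "\<sigma> \<in> Delta w B" "y \<in> convex hull ((\<lambda>v. axis v 1) ` \<sigma>)"
    using assms unfolding realization_def by blast
  then obtain bs where bs: "distinct bs" "set bs = B" "minlab_eq_basislab w bs" "\<sigma> \<subseteq> assoc_facet bs"
    unfolding Delta_def by blast
  have "convex hull ((\<lambda>v. axis v 1) ` \<sigma>) \<subseteq> convex hull ((\<lambda>v. axis v (1::real)) ` assoc_facet bs)"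
    by (rule hull_mono, rule image_mono, rule bs(4))
  thus ?thesis using s(2) bs unfolding ordering_def by blast
qed

lemma facet_in_real:
  assumes "ordering bs" "minlab_eq_basislab w bs"
  shows "convex hull ((\<lambda>v. axis v 1) ` assoc_facet bs) \<subseteq> realization (Delta w B)"
proof -
  have "assoc_facet bs \<in> Delta w B" using assms unfolding Delta_def ordering_def by blast
  thus ?thesis unfolding realization_def by blast
qed

lemma D1:
  assumes o: "ordering bs" "ordering bs'" and ni: "noninc bs t" "noninc bs' t"
    and i: "1 \<le> i" "i < n" and eq: "set (take i bs) = set (take i bs')"
  shows "t$(bs!(i-1)) \<le> t$(bs'!(i-1)) \<and> t$(bs!i) \<le> t$(bs'!i)"
proof
  have i1: "i - 1 < n" using i by simp
  have "bs'!(i-1) \<in> set (take i bs')" using ord_in_take[OF o(2) i1] i by simp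
  hence "bs'!(i-1) \<in> set (take i bs)" using eq by simp
  moreover obtain k where k: "k < n" "bs'!(i-1) = bs!k" using ord_idx[OF o(1) ord_nth[OF o(2) i1]] by blast
  ultimately have "k < i" using ord_in_take[OF o(1) k(1)] by simp
  hence "k \<le> i - 1" by simp
  hence "t$(bs!(i-1)) \<le> t$(bs!k)" using ni(1) k i unfolding noninc_def by simp
  thus "t$(bs!(i-1)) \<le> t$(bs'!(i-1))" using k by simp
next
  have "bs!i \<notin> set (take i bs)" using ord_in_take[OF o(1) i(2)] by simp
  hence nin: "bs!i \<notin> set (take i bs')" using eq by simp
  obtain k where k: "k < n" "bs!i = bs'!k" using ord_idx[OF o(2) ord_nth[OF o(1) i(2)]] by blast
  hence "i \<le> k" using nin ord_in_take[OF o(2) k(1)] by simp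
  hence "t$(bs'!k) \<le> t$(bs'!i)" using ni(2) k unfolding noninc_def by blast
  thus "t$(bs!i) \<le> t$(bs'!i)" using k by simp
qed

lemma H1:
  assumes o: "ordering bs" and ni: "noninc bs t" and i: "1 \<le> i" "i < n" and pos: "lam bs t i > 0"
  shows "set (take i bs) = {b\<in>B. t$(bs!i) < t$b}"
proof
  show "set (take i bs) \<subseteq> {b\<in>B. t$(bs!i) < t$b}"
  proof
    fix b assume b: "b \<in> set (take i bs)"
    hence bB: "b \<in> B" using ord_take_sub[OF o] by blast
    then obtain j where j: "j < n" "b = bs!j" using ord_idx[OF o] by blast
    hence "j < i" using b ord_in_take[OF o j(1)] by simp
    hence "j \<le> i - 1" "i - 1 < n" using i by auto
    hence "t$(bs!(i-1)) \<le> t$(bs!j)" using ni unfolding noninc_def by blast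
    thus "b \<in> {b\<in>B. t$(bs!i) < t$b}" using pos bB j unfolding lam_def by simp
  qed
next
  show "{b\<in>B. t$(bs!i) < t$b} \<subseteq> set (take i bs)"
  proof
    fix b assume b: "b \<in> {b\<in>B. t$(bs!i) < t$b}"
    then obtain j where j: "j < n" "b = bs!j" using ord_idx[OF o] by blast
    have "j < i"
    proof (rule ccontr)
      assume "\<not> j < i"
      hence "t$(bs!j) \<le> t$(bs!i)" using ni j unfolding noninc_def by simp
      thus False using b j by simp
    qed
    thus "b \<in> set (take i bs)" using ord_in_take[OF o j(1)] j by simp
  qed
qed

lemma H2:
  assumes o: "ordering bs'" and ni: "noninc bs' t" and P: "P \<subseteq> B" "card P = i" "i \<le> n"
    and sep: "\<forall>b\<in>P. \<forall>c\<in>B - P. t$c < t$b"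
  shows "set (take i bs') = P"
proof -
  have sub: "set (take i bs') \<subseteq> P"
  proof
    fix q assume q: "q \<in> set (take i bs')"
    have qB: "q \<in> B" using q ord_take_sub[OF o] by blast
    then obtain j where j: "j < n" "q = bs'!j" using ord_idx[OF o] by blast
    have ji: "j < i" using q j ord_in_take[OF o j(1)] by simp
    show "q \<in> P"
    proof (rule ccontr)
      assume nq: "q \<notin> P"
      have "P \<subseteq> set (take j bs')"
      proof
        fix p assume p: "p \<in> P"
        then obtain k where k: "k < n" "p = bs'!k" using ord_idx[OF o] P(1) by blast
        have "k < j"
        proof (rule ccontr)
          assume "\<not> k < j"
          hence "t$(bs'!k) \<le> t$(bs'!j)" using ni k unfolding noninc_def by simp
          moreover have "t$q < t$p" using sep p nq qB by blast
          ultimately show False using j k by simp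
        qed
        thus "p \<in> set (take j bs')" using ord_in_take[OF o k(1)] k by simp
      qed
      hence "card P \<le> card (set (take j bs'))" by (intro card_mono) auto
      also have "\<dots> \<le> j" using card_length[of "take j bs'"] by simp
      finally show False using ji P(2) by simp
    qed
  qed
  have "card (set (take i bs')) = i"
    using o P(3) ord_len[OF o] unfolding ordering_def by (simp add: distinct_card)
  thus ?thesis using sub P(2) by (intro card_subset_eq) auto
qed

lemma H3:
  assumes o: "ordering bs" "ordering bs'" and ni: "noninc bs t" "noninc bs' t"
    and i: "1 \<le> i" "i < n" and pos: "lam bs t i > 0"
  shows "pjoin bs' i = pjoin bs i \<and> lam bs' t i = lam bs t i"
proof -
  define P where "P = set (take i bs)"
  have P1: "P = {b\<in>B. t$(bs!i) < t$b}" unfolding P_def by (rule H1[OF o(1) ni(1) i pos])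
  have cP: "card P = i" unfolding P_def
    using o(1) i ord_len[OF o(1)] unfolding ordering_def by (simp add: distinct_card)
  have sep: "\<forall>b\<in>P. \<forall>c\<in>B - P. t$c < t$b"
  proof (intro ballI)
    fix b c assume "b \<in> P" "c \<in> B - P"
    hence "t$(bs!i) < t$b" "\<not> t$(bs!i) < t$c" using P1 by auto
    thus "t$c < t$b" by simp
  qed
  have eq: "set (take i bs') = P" by (rule H2[OF o(2) ni(2) _ cP _ sep]) (use P1 i in auto)
  hence "pjoin bs' i = pjoin bs i" unfolding pjoin_def P_def by simp
  moreover have "t$(bs!(i-1)) = t$(bs'!(i-1)) \<and> t$(bs!i) = t$(bs'!i)"
    using D1[OF o ni i] D1[OF o(2,1) ni(2,1) i] eq P_def by force
  ultimately show ?thesis unfolding lam_def by simp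
qed

lemma Yv_indep:
  assumes o: "ordering bs" "ordering bs'" and ni: "noninc bs t" "noninc bs' t"
  shows "Yv bs t = Yv bs' t"
  unfolding Yv_def
proof (rule sum.cong)
  fix i assume "i \<in> {1..<n}"
  hence i: "1 \<le> i" "i < n" by auto
  have nn: "lam bs t i \<ge> 0" "lam bs' t i \<ge> 0" using ni i unfolding noninc_def lam_def by simp_all
  show "lam bs t i *\<^sub>R axis (pjoin bs i) 1 = lam bs' t i *\<^sub>R axis (pjoin bs' i) 1"
  proof (cases "lam bs t i > 0")
    case True thus ?thesis using H3[OF o ni i] by simp
  next
    case False
    show ?thesis
    proof (cases "lam bs' t i > 0")
      case True thus ?thesis using H3[OF o(2,1) ni(2,1) i] by simp
    next
      case False
      thus ?thesis using \<open>\<not> lam bs t i > 0\<close> nn by simp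
    qed
  qed
qed simp

lemma good_point:
  assumes gt: "Good t" and n1: "1 \<le> n"
  shows "\<exists>y\<in>realization (Delta w B). Lm y = t"
proof -
  define R where "R x y \<longleftrightarrow> t$y < t$x \<or> (t$y = t$x \<and> w y < w x)" for x y
  have "\<exists>xs. distinct xs \<and> set xs = B \<and> sorted_wrt R xs"
  proof (rule sort_exists)
    show "finite B" by simp
    show "\<forall>x\<in>B. \<not> R x x" unfolding R_def by simp
    show "\<forall>x\<in>B. \<forall>y\<in>B. x \<noteq> y \<longrightarrow> R x y \<or> R y x"
      unfolding R_def using winj atB by (metis linorder_neqE_linordered_idom linorder_neqE_nat)
    show "\<forall>x\<in>B. \<forall>y\<in>B. \<forall>z\<in>B. R x y \<longrightarrow> R y z \<longrightarrow> R x z"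
      unfolding R_def by auto
  qed
  then obtain bs where bs: "distinct bs" "set bs = B" "sorted_wrt R bs" by blast
  have o: "ordering bs" using bs unfolding ordering_def by simp
  have len: "length bs = n" using ord_len[OF o] .
  have ko: "keyord bs t" unfolding keyord_def
  proof (intro allI impI)
    fix j k assume "j < k" "k < n"
    hence "R (bs!j) (bs!k)" using sorted_wrt_nth_less[OF bs(3)] len by simp
    thus "t$(bs!k) < t$(bs!j) \<or> (t$(bs!k) = t$(bs!j) \<and> w (bs!k) < w (bs!j))" unfolding R_def .
  qed
  have ni: "noninc bs t" by (rule keyord_noninc[OF ko])
  have c: "cons t" using gt unfolding Good_def by blast
  have gd: "minlab_eq_basislab w bs" by (rule cons_good[OF o ko c])
  have n0: "0 < n" using n1 by simp
  have top1: "t$(bs!0) = 1"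
  proof -
    obtain b where b: "b \<in> B" "t$b = 1" using gt unfolding Good_def by blast
    then obtain m where m: "m < n" "b = bs!m" using ord_idx[OF o] by blast
    have "t$(bs!m) \<le> t$(bs!0)" using ni m unfolding noninc_def by simp
    moreover have "t$(bs!0) \<le> 1" using gt ord_nth[OF o n0] unfolding Good_def by blast
    ultimately show ?thesis using b m by simp
  qed
  have bot0: "t$(bs!(n-1)) = 0"
  proof -
    obtain b where b: "b \<in> B" "t$b = 0" using gt unfolding Good_def by blast
    then obtain m where m: "m < n" "b = bs!m" using ord_idx[OF o] by blast
    have "t$(bs!(n-1)) \<le> t$(bs!m)" using ni m unfolding noninc_def by simp
    moreover have "0 \<le> t$(bs!(n-1))" using gt ord_nth[OF o] n0 unfolding Good_def by simp
    ultimately show ?thesis using b m by simp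
  qed
  let ?l = "lam bs t"
  have lnn: "\<forall>i\<in>{1..<n}. 0 \<le> ?l i" using ni unfolding noninc_def lam_def by simp
  have lsum: "sum ?l {1..<n} = 1"
    using tele[of 0 n "\<lambda>i. t$(bs!i)"] n0 top1 bot0 unfolding lam_def by simp
  define y where "y = Yv bs t"
  have yhull: "y \<in> convex hull ((\<lambda>v. axis v 1) ` assoc_facet bs)"
    unfolding y_def Yv_def
  proof (rule convex_sum)
    show "finite {1..<n}" by simp
    show "convex (convex hull ((\<lambda>v. axis v 1) ` assoc_facet bs))" by simp
    show "sum ?l {1..<n} = 1" by (rule lsum)
    show "\<And>i. i \<in> {1..<n} \<Longrightarrow> 0 \<le> ?l i" using lnn by blast
    fix i assume "i \<in> {1..<n}"
    hence "pjoin bs i \<in> assoc_facet bs" using facet_eq[OF o] by blast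
    thus "axis (pjoin bs i) 1 \<in> convex hull ((\<lambda>v. axis v 1) ` assoc_facet bs)"
      by (intro hull_inc) blast
  qed
  have yR: "y \<in> realization (Delta w B)" using facet_in_real[OF o gd] yhull by blast
  have "Lm y = t"
  proof (rule vec_eq_iff[THEN iffD2], rule allI)
    fix v
    show "Lm y $ v = t $ v"
    proof (cases "v \<in> B")
      case False thus ?thesis using gt unfolding Good_def Lm_def by simp
    next
      case True
      then obtain m where m: "m < n" "v = bs!m" using ord_idx[OF o] by blast
      have "Lm y $ (bs!m) = (\<Sum>i\<in>{Suc m..<n}. ?l i)"
        by (rule facet_point(1)[OF o n1 lnn lsum _ m(1)]) (simp add: y_def Yv_def)
      also have "\<dots> = t$(bs!m) - t$(bs!(n-1))"
        unfolding lam_def by (rule tele[OF m(1)])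
      finally show ?thesis using m bot0 by simp
    qed
  qed
  thus ?thesis using yR by blast
qed

theorem Lm_bij:
  assumes n1: "1 \<le> n"
  shows "Lm ` realization (Delta w B) = {t. Good t}" "inj_on Lm (realization (Delta w B))"
proof -
  have rep: "\<exists>bs. ordering bs \<and> minlab_eq_basislab w bs \<and> noninc bs (Lm y) \<and> Yv bs (Lm y) = y \<and> Good (Lm y)"
    if y: "y \<in> realization (Delta w B)" for y
  proof -
    obtain bs where bs: "ordering bs" "minlab_eq_basislab w bs" "y \<in> convex hull ((\<lambda>v. axis v 1) ` assoc_facet bs)"
      using real_mem[OF y] by blast
    obtain l where l: "\<forall>i\<in>{1..<n}. 0 \<le> l i" "sum l {1..<n} = 1" "y = (\<Sum>i\<in>{1..<n}. l i *\<^sub>R axis (pjoin bs i) (1::real))"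
      using hull_rep[OF bs(1,3)] by blast
    note fp = facet_point[OF bs(1) n1 l]
    have n0: "0 < n" using n1 by simp
    have "Good (Lm y)" unfolding Good_def
      using fp(4,5,6,7) good_cons[OF bs(1,2) fp(2)] ord_nth[OF bs(1) n0] ord_nth[OF bs(1), of "n-1"] n0
      by (metis diff_less zero_less_one)
    thus ?thesis using bs fp(2,3) by blast
  qed
  show "Lm ` realization (Delta w B) = {t. Good t}"
  proof
    show "Lm ` realization (Delta w B) \<subseteq> {t. Good t}" using rep by blast
    show "{t. Good t} \<subseteq> Lm ` realization (Delta w B)" using good_point[OF _ n1] by blast
  qed
  show "inj_on Lm (realization (Delta w B))"
  proof (rule inj_onI)
    fix y1 y2 assume y: "y1 \<in> realization (Delta w B)" "y2 \<in> realization (Delta w B)" "Lm y1 = Lm y2"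
    obtain bs1 where b1: "ordering bs1" "noninc bs1 (Lm y1)" "Yv bs1 (Lm y1) = y1" using rep[OF y(1)] by auto
    obtain bs2 where b2: "ordering bs2" "noninc bs2 (Lm y2)" "Yv bs2 (Lm y2) = y2" using rep[OF y(2)] by auto
    have n2: "noninc bs2 (Lm y1)" using b2(2) y(3) by simp
    have "y1 = Yv bs1 (Lm y1)" using b1(3) by simp
    also have "\<dots> = Yv bs2 (Lm y1)" by (rule Yv_indep[OF b1(1) b2(1) b1(2) n2])
    also have "\<dots> = Yv bs2 (Lm y2)" using y(3) by simp
    also have "\<dots> = y2" by (rule b2(3))
    finally show "y1 = y2" .
  qed
qed

end

lemma Min_cmul:
  fixes f :: "'b \<Rightarrow> real"
  assumes "c \<ge> 0" "finite A" "A \<noteq> {}"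
  shows "Min ((\<lambda>x. c * f x) ` A) = c * Min (f ` A)"
proof -
  have m: "mono (\<lambda>x::real. c * x)" by (rule monoI) (simp add: mult_left_mono assms(1))
  have "c * Min (f ` A) = Min ((\<lambda>x. c * x) ` (f ` A))"
    by (rule mono_Min_commute[OF m]) (use assms in auto)
  thus ?thesis by (simp add: image_image)
qed

lemma Max_cmul:
  fixes f :: "'b \<Rightarrow> real"
  assumes "c \<ge> 0" "finite A" "A \<noteq> {}"
  shows "Max ((\<lambda>x. c * f x) ` A) = c * Max (f ` A)"
proof -
  have m: "mono (\<lambda>x::real. c * x)" by (rule monoI) (simp add: mult_left_mono assms(1))
  have "c * Max (f ` A) = Max ((\<lambda>x. c * x) ` (f ` A))"
    by (rule mono_Max_commute[OF m]) (use assms in auto)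
  thus ?thesis by (simp add: image_image)
qed

lemma cont_Max:
  fixes f :: "'i \<Rightarrow> 'b::topological_space \<Rightarrow> real"
  assumes "finite I" "I \<noteq> {}" "\<And>i. i \<in> I \<Longrightarrow> continuous_on S (f i)"
  shows "continuous_on S (\<lambda>x. Max ((\<lambda>i. f i x) ` I))"
  using assms
proof (induction I rule: finite_ne_induct)
  case (singleton i) thus ?case by simp
next
  case (insert i I)
  have eq: "(\<lambda>x. Max ((\<lambda>i. f i x) ` insert i I)) = (\<lambda>x. max (f i x) (Max ((\<lambda>i. f i x) ` I)))"
    using insert by (simp add: Max_insert)
  show ?case unfolding eq using insert by (intro continuous_on_max) auto
qed

lemma cont_Min:
  fixes f :: "'i \<Rightarrow> 'b::topological_space \<Rightarrow> real"
  assumes "finite I" "I \<noteq> {}" "\<And>i. i \<in> I \<Longrightarrow> continuous_on S (f i)"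
  shows "continuous_on S (\<lambda>x. Min ((\<lambda>i. f i x) ` I))"
  using assms
proof (induction I rule: finite_ne_induct)
  case (singleton i) thus ?case by simp
next
  case (insert i I)
  have eq: "(\<lambda>x. Min ((\<lambda>i. f i x) ` insert i I)) = (\<lambda>x. min (f i x) (Min ((\<lambda>i. f i x) ` I)))"
    using insert by (simp add: Min_insert)
  show ?case unfolding eq using insert by (intro continuous_on_min) auto
qed

lemma cont_nth: "continuous_on S (\<lambda>x::(real,'n::finite) vec. x $ i)"
  by (rule linear_continuous_on) (rule bounded_linear_vec_nth)

context gsetup begin

definition PP :: "('a \<times> 'a) set" where
  "PP = {p. is_atom (fst p) \<and> fst p \<notin> B \<and> snd p \<in> supp (fst p) \<and> w (fst p) < w (snd p)}"

definition lowr :: "'a \<Rightarrow> 'a set" where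
  "lowr e = {a \<in> supp e. w a < w e}"

definition Psi :: "(real, 'a) vec \<Rightarrow> real" where
  "Psi u = Max ((\<lambda>p. Min ((\<lambda>a. u$a - u$(snd p)) ` lowr (fst p))) ` PP)"

lemma lowr_ne: "p \<in> PP \<Longrightarrow> lowr (fst p) \<noteq> {}"
  unfolding PP_def lowr_def using nbc_lower by auto

lemma lowr_B: "lowr e \<subseteq> B" unfolding lowr_def using supp_props(1) by auto

lemma PP_B: "p \<in> PP \<Longrightarrow> snd p \<in> B" unfolding PP_def using supp_props(1) by auto

lemma lowr_lt: "p \<in> PP \<Longrightarrow> a \<in> lowr (fst p) \<Longrightarrow> w a < w (snd p)"
  unfolding PP_def lowr_def by auto

lemma Psi_le_iff: "PP \<noteq> {} \<Longrightarrow> Psi t \<le> 0 \<longleftrightarrow> (\<forall>p\<in>PP. \<exists>a\<in>lowr (fst p). t$a \<le> t$(snd p))"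
proof -
  assume ne: "PP \<noteq> {}"
  have "Psi t \<le> 0 \<longleftrightarrow> (\<forall>p\<in>PP. Min ((\<lambda>a. t$a - t$(snd p)) ` lowr (fst p)) \<le> 0)"
    unfolding Psi_def using ne by (simp add: Max_le_iff)
  also have "\<dots> \<longleftrightarrow> (\<forall>p\<in>PP. \<exists>a\<in>lowr (fst p). t$a \<le> t$(snd p))"
    using lowr_ne by (auto simp: Min_le_iff)
  finally show ?thesis .
qed

lemma cons_iff_Psi:
  assumes ne: "PP \<noteq> {}"
  shows "cons t \<longleftrightarrow> Psi t \<le> 0"
  unfolding Psi_le_iff[OF ne]
proof
  assume c: "cons t"
  show "\<forall>p\<in>PP. \<exists>a\<in>lowr (fst p). t$a \<le> t$(snd p)"
  proof
    fix p assume p: "p \<in> PP"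
    obtain e d where ed: "p = (e, d)" by force
    have e: "is_atom e" "e \<notin> B" "d \<in> supp e" using p ed unfolding PP_def by auto
    obtain b where b: "b \<in> supp e" "w b \<le> w e" "\<forall>b'\<in>supp e. t$b \<le> t$b'" using c e(1) unfolding cons_def by blast
    have "w b \<noteq> w e" using w_ne[OF _ e(1,2)] b(1) supp_props(1) by blast
    hence "b \<in> lowr e" using b unfolding lowr_def by simp
    thus "\<exists>a\<in>lowr (fst p). t$a \<le> t$(snd p)" using b(3) e(3) ed by auto
  qed
next
  assume h: "\<forall>p\<in>PP. \<exists>a\<in>lowr (fst p). t$a \<le> t$(snd p)"
  show "cons t" unfolding cons_def
  proof (intro allI impI)
    fix e :: 'a assume e: "is_atom e"
    show "\<exists>b\<in>supp e. w b \<le> w e \<and> (\<forall>b'\<in>supp e. t$b \<le> t$b')"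
    proof (cases "e \<in> B")
      case True thus ?thesis using supp_B by simp
    next
      case False
      have lne: "lowr e \<noteq> {}" using nbc_lower[OF e False] unfolding lowr_def by auto
      have fl: "finite ((\<lambda>a. t$a) ` lowr e)" by simp
      have "Min ((\<lambda>a. t$a) ` lowr e) \<in> (\<lambda>a. t$a) ` lowr e" using fl lne by (intro Min_in) auto
      then obtain a where a: "a \<in> lowr e" "t$a = Min ((\<lambda>a. t$a) ` lowr e)" by auto
      have amin: "\<And>a'. a' \<in> lowr e \<Longrightarrow> t$a \<le> t$a'" using a(2) fl by simp
      have "\<forall>b'\<in>supp e. t$a \<le> t$b'"
      proof
        fix b' assume b': "b' \<in> supp e"
        show "t$a \<le> t$b'"
        proof (cases "w b' < w e")
          case True thus ?thesis using amin b' unfolding lowr_def by simp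
        next
          case False
          have "w b' \<noteq> w e" using w_ne[OF _ e \<open>e \<notin> B\<close>] b' supp_props(1) by blast
          hence "(e, b') \<in> PP" using False e \<open>e \<notin> B\<close> b' unfolding PP_def by simp
          then obtain a' where "a' \<in> lowr e" "t$a' \<le> t$b'" using h by fastforce
          thus ?thesis using amin by force
        qed
      qed
      moreover have "a \<in> supp e" "w a \<le> w e" using a(1) unfolding lowr_def by auto
      ultimately show ?thesis by blast
    qed
  qed
qed

lemma Psi_diff:
  assumes c: "c \<ge> 0" and ne: "PP \<noteq> {}"
    and d: "\<forall>a\<in>B. \<forall>d\<in>B. t$a - t$d = c * (u$a - u$d)"
  shows "Psi t = c * Psi u"
proof -
  have inner: "Min ((\<lambda>a. t$a - t$(snd p)) ` lowr (fst p)) = c * Min ((\<lambda>a. u$a - u$(snd p)) ` lowr (fst p))"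
    if p: "p \<in> PP" for p
  proof -
    have "(\<lambda>a. t$a - t$(snd p)) ` lowr (fst p) = (\<lambda>a. c * (u$a - u$(snd p))) ` lowr (fst p)"
      using d lowr_B PP_B[OF p] by (intro image_cong) auto
    thus ?thesis using Min_cmul[OF c _ lowr_ne[OF p]] by simp
  qed
  have "(\<lambda>p. Min ((\<lambda>a. t$a - t$(snd p)) ` lowr (fst p))) ` PP
      = (\<lambda>p. c * Min ((\<lambda>a. u$a - u$(snd p)) ` lowr (fst p))) ` PP"
    using inner by (intro image_cong) auto
  thus ?thesis unfolding Psi_def using Max_cmul[OF c _ ne] by simp
qed

lemma Psi_shift:
  assumes s: "s \<ge> 0" and ne: "PP \<noteq> {}"
    and d: "\<forall>a\<in>B. \<forall>d\<in>B. t$a - t$d = (u$a - u$d) + s * (real (w a) - real (w d))"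
  shows "Psi t \<le> Psi u - s"
  unfolding Psi_def
proof (rule Max.boundedI)
  show "finite ((\<lambda>p. Min ((\<lambda>a. t$a - t$(snd p)) ` lowr (fst p))) ` PP)" by simp
  show "(\<lambda>p. Min ((\<lambda>a. t$a - t$(snd p)) ` lowr (fst p))) ` PP \<noteq> {}" using ne by simp
  fix m assume "m \<in> (\<lambda>p. Min ((\<lambda>a. t$a - t$(snd p)) ` lowr (fst p))) ` PP"
  then obtain p where p: "p \<in> PP" "m = Min ((\<lambda>a. t$a - t$(snd p)) ` lowr (fst p))" by blast
  let ?U = "(\<lambda>a. u$a - u$(snd p)) ` lowr (fst p)"
  have "Min ?U \<in> ?U" using lowr_ne[OF p(1)] by (intro Min_in) auto
  then obtain a where a: "a \<in> lowr (fst p)" "u$a - u$(snd p) = Min ?U" by auto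
  have "m \<le> t$a - t$(snd p)" using p a(1) by simp
  also have "\<dots> = (u$a - u$(snd p)) + s * (real (w a) - real (w (snd p)))"
    using d a(1) lowr_B PP_B[OF p(1)] by blast
  also have "\<dots> \<le> (u$a - u$(snd p)) - s"
  proof -
    have "w a < w (snd p)" by (rule lowr_lt[OF p(1) a(1)])
    hence "real (w a) - real (w (snd p)) \<le> -1" by simp
    hence "s * (real (w a) - real (w (snd p))) \<le> s * (-1)" using s by (intro mult_left_mono) auto
    thus ?thesis by simp
  qed
  also have "\<dots> = Min ?U - s" using a(2) by simp
  also have "Min ?U \<le> Max ((\<lambda>p. Min ((\<lambda>a. u$a - u$(snd p)) ` lowr (fst p))) ` PP)"
    using p(1) by (intro Max_ge) auto
  finally show "m \<le> Max ((\<lambda>p. Min ((\<lambda>a. u$a - u$(snd p)) ` lowr (fst p))) ` PP) - s" by simp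
qed

lemma Psi_cont: "PP \<noteq> {} \<Longrightarrow> continuous_on S Psi"
  unfolding Psi_def
  by (intro cont_Max cont_Min continuous_on_diff cont_nth) (auto simp: lowr_ne)

end

locale gsetup2 = gsetup +
  assumes notfirst: "\<exists>B'. nbc_basis w B' \<and> lex_less w B' B"
begin

lemma ex_pair: "\<exists>p. \<exists>e. is_atom e \<and> e \<notin> B \<and> snd p \<in> supp e \<and> w e < w (snd p) \<and> fst p \<in> supp e \<and> w (fst p) < w e"
proof -
  obtain e d where ed: "is_atom e" "e \<notin> B" "d \<in> supp e" "w e < w d" using lex_upper[OF notfirst] by blast
  obtain a where a: "a \<in> supp e" "w a < w e" using nbc_lower[OF ed(1,2)] by blast
  show ?thesis by (rule exI[of _ "(a, d)"]) (use ed a in auto)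
qed

definition bpair :: "'a \<times> 'a" where
  "bpair = (SOME p. \<exists>e. is_atom e \<and> e \<notin> B \<and> snd p \<in> supp e \<and> w e < w (snd p) \<and> fst p \<in> supp e \<and> w (fst p) < w e)"

definition "b0 = fst bpair"
definition "bst = snd bpair"

lemma bpair_props: "\<exists>e. is_atom e \<and> e \<notin> B \<and> bst \<in> supp e \<and> w e < w bst \<and> b0 \<in> supp e \<and> w b0 < w e"
  using someI_ex[OF ex_pair] unfolding bpair_def[symmetric] b0_def bst_def .

lemma b0B: "b0 \<in> B" and bstB: "bst \<in> B" and wlt: "w b0 < w bst" and PPne: "PP \<noteq> {}"
proof -
  obtain e where e: "is_atom e" "e \<notin> B" "bst \<in> supp e" "w e < w bst" "b0 \<in> supp e" "w b0 < w e"
    using bpair_props by blast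
  show "b0 \<in> B" "bst \<in> B" using e supp_props(1) by auto
  show "w b0 < w bst" using e by simp
  have "(e, bst) \<in> PP" using e unfolding PP_def by simp
  thus "PP \<noteq> {}" by blast
qed

lemma b0_ne_bst: "b0 \<noteq> bst" using wlt by auto

definition "Bx = B - {b0, bst}"

lemma card_Bx: "card Bx = n - 2"
  unfolding Bx_def using b0B bstB b0_ne_bst by (simp add: card_Diff_subset)

lemma n2: "2 \<le> n"
proof -
  have "{b0, bst} \<subseteq> B" using b0B bstB by simp
  hence "card {b0, bst} \<le> n" by (intro card_mono) auto
  thus ?thesis using b0_ne_bst by simp
qed

definition "wd = real (w bst) - real (w b0)"
lemma wd_pos: "wd > 0" unfolding wd_def using wlt by simp

definition alpha :: "(real, 'a) vec \<Rightarrow> real" where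
  "alpha u = (u$bst - u$b0) / wd"

definition xmap :: "(real, 'a) vec \<Rightarrow> (real, 'a) vec" where
  "xmap u = (\<chi> v. if v \<in> Bx then (u$v - u$b0) - alpha u * (real (w v) - real (w b0)) else 0)"

definition SS :: "(real, 'a) vec set" where
  "SS = {x. \<forall>i. i \<notin> Bx \<longrightarrow> x$i = 0}"

definition Nm :: "(real, 'a) vec \<Rightarrow> real" where
  "Nm u = sqrt ((norm (xmap u))\<^sup>2 + (Psi u)\<^sup>2)"

definition G :: "(real, 'a) vec \<Rightarrow> (real, 'a) vec" where
  "G u = (1 / Nm u) *\<^sub>R xmap u"

lemma xmap_diff:
  assumes d: "\<forall>a\<in>B. \<forall>d\<in>B. t$a - t$d = c * (u$a - u$d)"
  shows "xmap t = c *\<^sub>R xmap u"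
proof -
  have al: "alpha t = c * alpha u" unfolding alpha_def using d b0B bstB by simp
  show ?thesis unfolding xmap_def
  proof (rule vec_eq_iff[THEN iffD2], rule allI)
    fix v
    show "(\<chi> v. if v \<in> Bx then (t$v - t$b0) - alpha t * (real (w v) - real (w b0)) else 0) $ v =
          (c *\<^sub>R (\<chi> v. if v \<in> Bx then (u$v - u$b0) - alpha u * (real (w v) - real (w b0)) else 0)) $ v"
    proof (cases "v \<in> Bx")
      case True
      hence "v \<in> B" unfolding Bx_def by simp
      hence "t$v - t$b0 = c * (u$v - u$b0)" using d b0B by blast
      thus ?thesis using True al by (simp add: algebra_simps)
    qed simp
  qed
qed

lemma xmap_shift:
  assumes d: "\<forall>a\<in>B. \<forall>d\<in>B. t$a - t$d = (u$a - u$d) + s * (real (w a) - real (w d))"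
  shows "xmap t = xmap u"
proof -
  have "t$bst - t$b0 = (u$bst - u$b0) + s * wd" using d b0B bstB unfolding wd_def by blast
  hence al: "alpha t = alpha u + s" unfolding alpha_def using wd_pos by (simp add: field_simps)
  show ?thesis unfolding xmap_def
  proof (rule vec_eq_iff[THEN iffD2], rule allI)
    fix v
    show "(\<chi> v. if v \<in> Bx then (t$v - t$b0) - alpha t * (real (w v) - real (w b0)) else 0) $ v =
          (\<chi> v. if v \<in> Bx then (u$v - u$b0) - alpha u * (real (w v) - real (w b0)) else 0) $ v"
    proof (cases "v \<in> Bx")
      case True
      hence "v \<in> B" unfolding Bx_def by simp
      hence "t$v - t$b0 = (u$v - u$b0) + s * (real (w v) - real (w b0))" using d b0B by blast
      thus ?thesis using True al by (simp add: algebra_simps)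
    qed simp
  qed
qed

lemma xmap_eq:
  assumes e: "xmap u1 = xmap u2"
  shows "\<exists>s. \<forall>a\<in>B. \<forall>d\<in>B. u2$a - u2$d = (u1$a - u1$d) + s * (real (w a) - real (w d))"
proof -
  define s where "s = alpha u2 - alpha u1"
  define k where "k = (u2$b0 - u1$b0) - s * real (w b0)"
  have key: "u2$b = u1$b + s * real (w b) + k" if b: "b \<in> B" for b
  proof -
    consider "b \<in> Bx" | "b = b0" | "b = bst" using b unfolding Bx_def by blast
    thus ?thesis
    proof cases
      case 1
      have "xmap u1 $ b = xmap u2 $ b" using e by simp
      hence "(u1$b - u1$b0) - alpha u1 * (real (w b) - real (w b0)) = (u2$b - u2$b0) - alpha u2 * (real (w b) - real (w b0))"
        unfolding xmap_def using 1 by simp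
      thus ?thesis unfolding k_def s_def by (simp add: algebra_simps)
    next
      case 2 thus ?thesis unfolding k_def by simp
    next
      case 3
      have "alpha u1 * wd = u1$bst - u1$b0" "alpha u2 * wd = u2$bst - u2$b0"
        unfolding alpha_def using wd_pos by auto
      hence "s * wd = (u2$bst - u2$b0) - (u1$bst - u1$b0)" unfolding s_def by (simp add: algebra_simps)
      thus ?thesis using 3 unfolding k_def wd_def by (simp add: algebra_simps)
    qed
  qed
  show ?thesis
  proof (rule exI[of _ s], intro ballI)
    fix a d assume "a \<in> B" "d \<in> B"
    thus "u2$a - u2$d = (u1$a - u1$d) + s * (real (w a) - real (w d))"
      using key by (simp add: algebra_simps)
  qed
qed

lemma xmap_SS: "v \<in> SS \<Longrightarrow> xmap v = v"
proof -
  assume v: "v \<in> SS"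
  have z: "v$b0 = 0" "v$bst = 0" using v unfolding SS_def Bx_def by auto
  hence al: "alpha v = 0" unfolding alpha_def by simp
  show ?thesis unfolding xmap_def
    by (rule vec_eq_iff[THEN iffD2]) (use v z al in \<open>auto simp: SS_def\<close>)
qed

lemma xmap_in_SS: "xmap u \<in> SS" unfolding SS_def xmap_def by simp

lemma xmap_cont: "continuous_on S xmap"
  unfolding xmap_def alpha_def
proof (rule continuous_on_vec_lambda)
  fix v
  show "continuous_on S (\<lambda>x. if v \<in> Bx then x $ v - x $ b0 - (x $ bst - x $ b0) / wd * (real (w v) - real (w b0)) else 0)"
    using wd_pos by (cases "v \<in> Bx") (auto intro!: continuous_intros cont_nth)
qed

lemma Psi_const: "\<forall>a\<in>B. \<forall>d\<in>B. u$a = u$d \<Longrightarrow> Psi u = 0 \<and> xmap u = 0"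
proof -
  assume h: "\<forall>a\<in>B. \<forall>d\<in>B. u$a = u$d"
  have d0: "\<forall>a\<in>B. \<forall>d\<in>B. u$a - u$d = 0 * (u$a - u$d)"
  proof (intro ballI)
    fix a d assume "a \<in> B" "d \<in> B"
    hence "u$a = u$d" using h by blast
    thus "u$a - u$d = 0 * (u$a - u$d)" by simp
  qed
  show ?thesis using Psi_diff[OF _ PPne d0] xmap_diff[OF d0] by simp
qed

lemma Good_Psi: "Good t \<Longrightarrow> Psi t \<le> 0"
  using cons_iff_Psi[OF PPne] unfolding Good_def by blast

lemma Good_noncon: "Good t \<Longrightarrow> \<exists>a\<in>B. \<exists>d\<in>B. t$a \<noteq> t$d"
proof -
  assume "Good t"
  then obtain a d where "a \<in> B" "t$a = 1" "d \<in> B" "t$d = 0" unfolding Good_def by blast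
  thus ?thesis by force
qed

lemma shift_contra:
  assumes d: "\<forall>a\<in>B. \<forall>d\<in>B. t$a - t$d = (u$a - u$d) + s * (real (w a) - real (w d))"
    and ps: "Psi t = Psi u"
  shows "s = 0"
proof (rule ccontr)
  assume "s \<noteq> 0"
  then consider "s > 0" | "s < 0" by linarith
  thus False
  proof cases
    case 1
    have "Psi t \<le> Psi u - s" using Psi_shift[OF _ PPne d] 1 by simp
    thus False using ps 1 by simp
  next
    case 2
    have d': "\<forall>a\<in>B. \<forall>d\<in>B. u$a - u$d = (t$a - t$d) + (-s) * (real (w a) - real (w d))"
      using d by (simp add: algebra_simps)
    have "Psi u \<le> Psi t - (-s)" using Psi_shift[OF _ PPne d'] 2 by simp
    thus False using ps 2 by simp
  qed
qed

lemma Nm_pos: "Good t \<Longrightarrow> Nm t > 0"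
proof (rule ccontr)
  assume gt: "Good t" and "\<not> Nm t > 0"
  hence "Nm t = 0" unfolding Nm_def by (meson real_sqrt_ge_zero add_nonneg_nonneg zero_le_power2 not_less order.antisym)
  hence "(norm (xmap t))\<^sup>2 + (Psi t)\<^sup>2 = 0" unfolding Nm_def by simp
  hence x0: "xmap t = 0" and p0: "Psi t = 0" by (simp_all add: add_nonneg_eq_0_iff)
  have "xmap 0 = (0::(real,'a) vec)" using Psi_const[of 0] by simp
  hence "xmap 0 = xmap t" using x0 by simp
  then obtain s where s: "\<forall>a\<in>B. \<forall>d\<in>B. t$a - t$d = ((0::(real,'a) vec)$a - (0::(real,'a) vec)$d) + s * (real (w a) - real (w d))"
    using xmap_eq by blast
  have "Psi (0::(real,'a) vec) = 0" using Psi_const[of 0] by simp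
  hence "s = 0" using shift_contra[OF s] p0 by simp
  hence "\<forall>a\<in>B. \<forall>d\<in>B. t$a = t$d"
  proof (intro ballI)
    fix a d assume ad: "a \<in> B" "d \<in> B"
    have "t$a - t$d = 0" using s[rule_format, OF ad] \<open>s = 0\<close> by simp
    thus "t$a = t$d" by simp
  qed
  thus False using Good_noncon[OF gt] by blast
qed

lemma norm_le_Nm: "norm (xmap u) \<le> Nm u"
  unfolding Nm_def by (rule real_le_rsqrt) simp

lemma G_in: "Good t \<Longrightarrow> G t \<in> cball 0 1 \<inter> SS"
proof -
  assume gt: "Good t"
  have np: "Nm t > 0" by (rule Nm_pos[OF gt])
  have "norm (G t) = norm (xmap t) / Nm t" unfolding G_def using np by simp
  also have "\<dots> \<le> 1" using norm_le_Nm[of t] np by simp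
  finally have "G t \<in> cball 0 1" by simp
  moreover have "G t \<in> SS" using xmap_in_SS[of t] unfolding G_def SS_def by simp
  ultimately show ?thesis by simp
qed

end

context gsetup2 begin

lemma Nm_sq: "(Nm u)\<^sup>2 = (norm (xmap u))\<^sup>2 + (Psi u)\<^sup>2"
  unfolding Nm_def by simp

lemma G_inj:
  assumes g1: "Good t1" and g2: "Good t2" and eq: "G t1 = G t2"
  shows "t1 = t2"
proof -
  define N1 where "N1 = Nm t1"
  define N2 where "N2 = Nm t2"
  define X1 where "X1 = xmap t1"
  define X2 where "X2 = xmap t2"
  define P1 where "P1 = Psi t1"
  define P2 where "P2 = Psi t2"
  have N1p: "N1 > 0" unfolding N1_def by (rule Nm_pos[OF g1])
  have N2p: "N2 > 0" unfolding N2_def by (rule Nm_pos[OF g2])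
  have P1n: "P1 \<le> 0" unfolding P1_def by (rule Good_Psi[OF g1])
  have P2n: "P2 \<le> 0" unfolding P2_def by (rule Good_Psi[OF g2])
  have sq1: "N1\<^sup>2 = (norm X1)\<^sup>2 + P1\<^sup>2" unfolding N1_def X1_def P1_def by (rule Nm_sq)
  have sq2: "N2\<^sup>2 = (norm X2)\<^sup>2 + P2\<^sup>2" unfolding N2_def X2_def P2_def by (rule Nm_sq)
  have h: "(1 / N1) *\<^sub>R X1 = (1 / N2) *\<^sub>R X2" using eq unfolding G_def N1_def N2_def X1_def X2_def .
  have nx: "norm X1 / N1 = norm X2 / N2"
  proof -
    have "norm ((1 / N1) *\<^sub>R X1) = norm ((1 / N2) *\<^sub>R X2)" using h by simp
    thus ?thesis using N1p N2p by simp
  qed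
  have r1: "(P1 / N1)\<^sup>2 = 1 - (norm X1 / N1)\<^sup>2"
  proof -
    have "P1\<^sup>2 = N1\<^sup>2 - (norm X1)\<^sup>2" using sq1 by simp
    thus ?thesis using N1p by (simp add: power_divide diff_divide_distrib)
  qed
  have r2: "(P2 / N2)\<^sup>2 = 1 - (norm X2 / N2)\<^sup>2"
  proof -
    have "P2\<^sup>2 = N2\<^sup>2 - (norm X2)\<^sup>2" using sq2 by simp
    thus ?thesis using N2p by (simp add: power_divide diff_divide_distrib)
  qed
  define q1 where "q1 = - (P1 / N1)"
  define q2 where "q2 = - (P2 / N2)"
  have "q1\<^sup>2 = q2\<^sup>2" unfolding q1_def q2_def using r1 r2 nx by (simp add: power2_eq_square)
  moreover have "0 \<le> q1" "0 \<le> q2" unfolding q1_def q2_def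
    using divide_nonpos_pos[OF P1n N1p] divide_nonpos_pos[OF P2n N2p] by simp_all
  ultimately have "q1 = q2" using power2_eq_iff_nonneg by blast
  hence pq: "P1 / N1 = P2 / N2" unfolding q1_def q2_def by simp
  define c where "c = N2 / N1"
  have cp: "c > 0" unfolding c_def using N1p N2p by simp
  have X2c: "X2 = c *\<^sub>R X1"
  proof -
    have "X2 = N2 *\<^sub>R ((1 / N2) *\<^sub>R X2)" using N2p by simp
    also have "\<dots> = N2 *\<^sub>R ((1 / N1) *\<^sub>R X1)" using h by simp
    finally show ?thesis unfolding c_def by simp
  qed
  have P2c: "P2 = c * P1" using pq N1p N2p unfolding c_def by (simp add: field_simps)
  define u where "u = c *\<^sub>R t1"
  have du: "\<forall>a\<in>B. \<forall>d\<in>B. u$a - u$d = c * (t1$a - t1$d)" unfolding u_def by (simp add: algebra_simps)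
  have xu: "xmap u = X2" using xmap_diff[OF du] X2c unfolding X1_def by simp
  have pu: "Psi u = P2" using Psi_diff[OF _ PPne du] cp P2c unfolding P1_def by simp
  obtain s where s: "\<forall>a\<in>B. \<forall>d\<in>B. t2$a - t2$d = (u$a - u$d) + s * (real (w a) - real (w d))"
    using xmap_eq[of u t2] xu unfolding X2_def by blast
  have "s = 0" using shift_contra[OF s] pu unfolding P2_def by simp
  hence D: "\<And>a d. a \<in> B \<Longrightarrow> d \<in> B \<Longrightarrow> t2$a - t2$d = c * (t1$a - t1$d)" using s du by simp
  obtain a1 d1 where ad1: "a1 \<in> B" "t1$a1 = 1" "d1 \<in> B" "t1$d1 = 0" using g1 unfolding Good_def by blast
  obtain a2 d2 where ad2: "a2 \<in> B" "t2$a2 = 1" "d2 \<in> B" "t2$d2 = 0" using g2 unfolding Good_def by blast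
  have rg1: "\<And>b. b \<in> B \<Longrightarrow> 0 \<le> t1$b \<and> t1$b \<le> 1" using g1 unfolding Good_def by blast
  have rg2: "\<And>b. b \<in> B \<Longrightarrow> 0 \<le> t2$b \<and> t2$b \<le> 1" using g2 unfolding Good_def by blast
  have "c \<le> 1" using D[OF ad1(1,3)] ad1 rg2[OF ad1(1)] rg2[OF ad1(3)] by simp
  moreover have "1 \<le> c"
  proof -
    have "1 = c * (t1$a2 - t1$d2)" using D[OF ad2(1,3)] ad2 by simp
    moreover have "t1$a2 - t1$d2 \<le> 1" using rg1[OF ad2(1)] rg1[OF ad2(3)] by simp
    ultimately show ?thesis using cp by (metis mult_left_mono mult.right_neutral order.trans less_imp_le)
  qed
  ultimately have c1: "c = 1" by simp
  have "t2$d1 = 0"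
  proof -
    have "t2$d2 - t2$d1 = t1$d2 - t1$d1" using D[OF ad2(3) ad1(3)] c1 by simp
    hence "t2$d1 \<le> 0" using ad1 ad2 rg1[OF ad2(3)] by simp
    thus ?thesis using rg2[OF ad1(3)] by simp
  qed
  hence onB: "\<And>b. b \<in> B \<Longrightarrow> t2$b = t1$b" using D[OF _ ad1(3)] c1 ad1(4) by simp
  show ?thesis
  proof (rule vec_eq_iff[THEN iffD2], rule allI)
    fix v show "t1$v = t2$v"
      using onB[of v] g1 g2 unfolding Good_def by (cases "v \<in> B") auto
  qed
qed

lemma G_surj:
  assumes v: "v \<in> cball 0 1 \<inter> SS"
  shows "\<exists>t. Good t \<and> G t = v"
proof -
  have nv: "norm v \<le> 1" using v by simp
  have vS: "v \<in> SS" using v by simp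
  define \<beta> where "\<beta> = sqrt (1 - (norm v)\<^sup>2)"
  have nsq: "(norm v)\<^sup>2 \<le> 1" using mult_le_one[OF nv norm_ge_zero nv] by (simp add: power2_eq_square)
  have b0': "\<beta> \<ge> 0" unfolding \<beta>_def using nsq by simp
  have bsq: "\<beta>\<^sup>2 = 1 - (norm v)\<^sup>2" unfolding \<beta>_def using nsq by simp
  define pw :: "(real, 'a) vec" where "pw = (\<chi> i. real (w i))"
  define g where "g s = Psi (v + s *\<^sub>R pw)" for s
  have sh: "\<forall>a\<in>B. \<forall>d\<in>B. (v + s *\<^sub>R pw)$a - (v + s *\<^sub>R pw)$d = (v$a - v$d) + s * (real (w a) - real (w d))" for s
    unfolding pw_def by (simp add: algebra_simps)
  define M where "M = \<bar>Psi v\<bar> + \<beta>"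
  have M0: "M \<ge> 0" unfolding M_def using b0' by simp
  have gM: "g M \<le> - \<beta>"
  proof -
    have "g M \<le> Psi v - M" unfolding g_def by (rule Psi_shift[OF M0 PPne sh])
    thus ?thesis unfolding M_def by simp
  qed
  have gmM: "- \<beta> \<le> g (- M)"
  proof -
    have sh2: "\<forall>a\<in>B. \<forall>d\<in>B. v$a - v$d = ((v + (-M) *\<^sub>R pw)$a - (v + (-M) *\<^sub>R pw)$d) + M * (real (w a) - real (w d))"
      unfolding pw_def by (simp add: algebra_simps)
    have "Psi v \<le> g (- M) - M" unfolding g_def by (rule Psi_shift[OF M0 PPne sh2])
    thus ?thesis unfolding M_def using b0' by simp
  qed
  have gc: "continuous_on {- M..M} g"
  proof -
    have c1: "continuous_on {- M..M} (\<lambda>s. v + s *\<^sub>R pw)" by (intro continuous_intros)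
    have "continuous_on ((\<lambda>s. v + s *\<^sub>R pw) ` {- M..M}) Psi" by (rule Psi_cont[OF PPne])
    hence "continuous_on {- M..M} (Psi \<circ> (\<lambda>s. v + s *\<^sub>R pw))" by (rule continuous_on_compose[OF c1])
    thus ?thesis unfolding g_def comp_def by simp
  qed
  obtain s where s: "- M \<le> s" "s \<le> M" "g s = - \<beta>"
    using IVT2'[of g M "- \<beta>" "- M", OF gM gmM _ gc] M0 by auto
  define u where "u = v + s *\<^sub>R pw"
  have xu: "xmap u = v" unfolding u_def using xmap_shift[OF sh[of s]] xmap_SS[OF vS] by simp
  have pu: "Psi u = - \<beta>" using s(3) unfolding g_def u_def by simp
  have Nu: "Nm u = 1" unfolding Nm_def using xu pu bsq by simp
  have ncon: "\<not> (\<forall>a\<in>B. \<forall>d\<in>B. u$a = u$d)"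
  proof
    assume "\<forall>a\<in>B. \<forall>d\<in>B. u$a = u$d"
    hence "Psi u = 0" "xmap u = 0" using Psi_const by blast+
    hence "Nm u = 0" unfolding Nm_def by simp
    thus False using Nu by simp
  qed
  have Bne: "B \<noteq> {}" using b0B by blast
  define m where "m = Min ((\<lambda>b. u$b) ` B)"
  define Mx where "Mx = Max ((\<lambda>b. u$b) ` B)"
  have mle: "\<And>b. b \<in> B \<Longrightarrow> m \<le> u$b" unfolding m_def by simp
  have Mge: "\<And>b. b \<in> B \<Longrightarrow> u$b \<le> Mx" unfolding Mx_def by simp
  obtain bm where bm: "bm \<in> B" "u$bm = m"
  proof -
    have "m \<in> (\<lambda>b. u$b) ` B" unfolding m_def using Bne by (intro Min_in) auto
    thus ?thesis using that by auto
  qed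
  obtain bM where bM: "bM \<in> B" "u$bM = Mx"
  proof -
    have "Mx \<in> (\<lambda>b. u$b) ` B" unfolding Mx_def using Bne by (intro Max_in) auto
    thus ?thesis using that by auto
  qed
  have mM: "m < Mx"
  proof (rule ccontr)
    assume "\<not> m < Mx"
    hence "\<forall>a\<in>B. \<forall>d\<in>B. u$a = u$d" using mle Mge by (meson order.antisym order.trans not_less)
    thus False using ncon by blast
  qed
  define \<kappa> where "\<kappa> = 1 / (Mx - m)"
  have kp: "\<kappa> > 0" unfolding \<kappa>_def using mM by simp
  define t where "t = (\<chi> i. if i \<in> B then \<kappa> * (u$i - m) else 0)"
  have dt: "\<forall>a\<in>B. \<forall>d\<in>B. t$a - t$d = \<kappa> * (u$a - u$d)" unfolding t_def by (simp add: algebra_simps)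
  have xt: "xmap t = \<kappa> *\<^sub>R v" using xmap_diff[OF dt] xu by simp
  have pt: "Psi t = - (\<kappa> * \<beta>)" using Psi_diff[OF _ PPne dt] kp pu by simp
  have "Good t" unfolding Good_def
  proof (intro conjI)
    show "\<forall>v. v \<notin> B \<longrightarrow> t$v = 0" unfolding t_def by simp
    show "\<forall>b\<in>B. 0 \<le> t$b \<and> t$b \<le> 1"
    proof
      fix b assume b: "b \<in> B"
      have "0 \<le> u$b - m" "u$b - m \<le> Mx - m" using mle[OF b] Mge[OF b] by auto
      hence "0 \<le> \<kappa> * (u$b - m)" "\<kappa> * (u$b - m) \<le> 1" unfolding \<kappa>_def using mM by (auto simp: field_simps)
      thus "0 \<le> t$b \<and> t$b \<le> 1" unfolding t_def using b by simp
    qed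
    show "\<exists>b\<in>B. t$b = 1" using bM mM unfolding t_def \<kappa>_def by auto
    show "\<exists>b\<in>B. t$b = 0" using bm unfolding t_def by auto
    show "cons t" using cons_iff_Psi[OF PPne] pt kp b0' by simp
  qed
  moreover have "G t = v"
  proof -
    have "(Nm t)\<^sup>2 = \<kappa>\<^sup>2 * ((norm v)\<^sup>2 + \<beta>\<^sup>2)" unfolding Nm_sq xt pt
      using kp by (simp add: power2_eq_square algebra_simps)
    hence "(Nm t)\<^sup>2 = \<kappa>\<^sup>2" using bsq by simp
    hence "Nm t = \<kappa>" using kp unfolding Nm_def by (simp add: power2_eq_iff_nonneg)
    thus ?thesis unfolding G_def xt using kp by simp
  qed
  ultimately show ?thesis by blast
qed

lemma SS_subspace: "subspace SS"
  unfolding subspace_def SS_def by auto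

lemma SS_dim: "dim SS = card Bx"
proof -
  define d where "d = (\<lambda>i. axis i (1::real)) ` Bx"
  have Bas: "(Basis :: (real, 'a) vec set) = range (\<lambda>i. axis i 1)"
    unfolding Basis_vec_def by auto
  have dB: "d \<subseteq> Basis" unfolding d_def Bas by auto
  have eq: "SS = {x. \<forall>i\<in>Basis. i \<notin> d \<longrightarrow> x \<bullet> i = 0}"
  proof (intro set_eqI iffI)
    fix x assume x: "x \<in> SS"
    show "x \<in> {x. \<forall>i\<in>Basis. i \<notin> d \<longrightarrow> x \<bullet> i = 0}"
    proof (intro CollectI ballI impI)
      fix j assume j: "j \<in> (Basis :: (real, 'a) vec set)" "j \<notin> d"
      then obtain i where i: "j = axis i 1" unfolding Bas by auto
      hence "i \<notin> Bx" using j unfolding d_def by auto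
      thus "x \<bullet> j = 0" using x i unfolding SS_def by (simp add: inner_axis)
    qed
  next
    fix x assume x: "x \<in> {x. \<forall>i\<in>Basis. i \<notin> d \<longrightarrow> x \<bullet> i = 0}"
    show "x \<in> SS" unfolding SS_def
    proof (intro CollectI allI impI)
      fix i assume i: "i \<notin> Bx"
      have "axis i 1 \<in> (Basis :: (real, 'a) vec set)" unfolding Bas by auto
      moreover have "axis i (1::real) \<notin> d" using i unfolding d_def by (auto simp: axis_eq_axis)
      ultimately have "x \<bullet> axis i 1 = 0" using x by blast
      thus "x$i = 0" by (simp add: inner_axis)
    qed
  qed
  have "dim SS = card d" unfolding eq by (rule dim_substandard[OF dB])
  moreover have "card d = card Bx" unfolding d_def
    by (rule card_image) (auto intro!: inj_onI simp: axis_eq_axis)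
  ultimately show ?thesis by simp
qed

lemma Lm_cont: "continuous_on S Lm"
  unfolding Lm_def
proof (rule continuous_on_vec_lambda)
  fix b
  show "continuous_on S (\<lambda>y. if b \<in> B then \<Sum>v\<in>{v. b \<le> v}. y $ v else 0)"
    by (cases "b \<in> B") (auto intro!: continuous_intros cont_nth)
qed

lemma G_cont: "continuous_on {t. Good t} G"
  unfolding G_def
proof (intro continuous_on_scaleR continuous_on_divide continuous_on_const xmap_cont)
  show "continuous_on {t. Good t} Nm" unfolding Nm_def
    by (intro continuous_intros xmap_cont Psi_cont[OF PPne])
  show "\<forall>x\<in>{t. Good t}. Nm x \<noteq> 0" using Nm_pos by fastforce
qed

theorem main: "\<exists>S :: (real, 'a) vec set. subspace S \<and> dim S = n - 2
           \<and> realization (Delta w B) homeomorphic (cball 0 1 \<inter> S)"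
proof (intro exI conjI)
  show "subspace SS" by (rule SS_subspace)
  show "dim SS = n - 2" using SS_dim card_Bx by simp
  let ?R = "realization (Delta w B)"
  have n1: "1 \<le> n" using n2 by simp
  note LB = Lm_bij[OF n1]
  have comp: "compact ?R" unfolding realization_def
    by (intro compact_UN finite_imp_compact compact_convex_hull finite_imageI) auto
  have cont: "continuous_on ?R (G \<circ> Lm)"
    by (rule continuous_on_compose[OF Lm_cont]) (unfold LB(1), rule G_cont)
  have img: "(G \<circ> Lm) ` ?R = cball 0 1 \<inter> SS"
  proof -
    have "(G \<circ> Lm) ` ?R = G ` {t. Good t}" unfolding image_comp[symmetric] LB(1) ..
    also have "\<dots> = cball 0 1 \<inter> SS"
    proof
      show "G ` {t. Good t} \<subseteq> cball 0 1 \<inter> SS" using G_in by blast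
      show "cball 0 1 \<inter> SS \<subseteq> G ` {t. Good t}" using G_surj by blast
    qed
    finally show ?thesis .
  qed
  have inj: "inj_on (G \<circ> Lm) ?R"
  proof (rule comp_inj_on[OF LB(2)])
    show "inj_on G (Lm ` ?R)" unfolding LB(1) by (rule inj_onI) (use G_inj in blast)
  qed
  show "?R homeomorphic (cball 0 1 \<inter> SS)" by (rule homeomorphic_compact[OF comp cont img inj])
qed

end

theorem proposition4p4:
  fixes w :: "'a::{finite,complete_lattice} \<Rightarrow> nat"
    and r :: nat
    and B :: "'a::{finite,complete_lattice} set"
  assumes "geometric_lattice TYPE('a::{finite,complete_lattice})"
    and "lrank (top::'a::{finite,complete_lattice}) = r + 1"
    and "inj_on w {a. is_atom a}"
    and "nbc_basis w B"
    and "\<exists>B'. nbc_basis w B' \<and> lex_less w B' B"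
  shows "\<exists>S :: (real ^ 'a::{finite,complete_lattice}) set. subspace S \<and> dim S = r - 1
           \<and> realization (Delta w B) homeomorphic (cball 0 1 \<inter> S)"
proof -
  interpret gsetup2 w B
    by unfold_locales (use assms in auto)
  have cB: "card B = r + 1" using cardB assms(2) by simp
  obtain S :: "(real, 'a) vec set" where S: "subspace S" "dim S = card B - 2"
    "realization (Delta w B) homeomorphic (cball 0 1 \<inter> S)"
    using main by blast
  show ?thesis using S cB by (intro exI[of _ S]) auto
qed

end
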